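(* Let $(M,F)$ be a conic pseudo-Finsler surface which is Landsberg, and let $f$ be a smooth $h(0)$ function on $\mathcal A$. If $f$ is horizontally constant, then $f_{;2}$ and $f_{;2;2}$ are horizontally constant.
   Context: Throughout, $M$ is a smooth $2$-dimensional manifold, $TM_0$ its slit tangent bundle with induced local coordinates $(x^i,y^i)$, $\partial_i=\partial/\partial x^i$, $\dot\partial_i=\partial/\partial y^i$. A function is called $h(r)$ if it is positively homogeneous of degree $r$ in $y$. A conic pseudo-Finsler surface $(M,F)$ consists of a conic subbundle $\mathcal A\subset TM_0$ (an open set invariant under $y\mapsto\lambda y$, $\lambda>0$, projecting onto $M$) and a smooth $h(1)$ function $F:\mathcal A\to\mathbb R$ such that $g_{ij}=\frac12\dot\partial_i\dot\partial_jF^2$ is nondegenerate. Put $\ell_i=\dot\partial_iF$, $\ell^i=y^i/F$. Modified Berwald frame: $\varepsilon\in\{1,-1\}$ and a covector $m_i$ satisfy $g_{ij}=\ell_i\ell_j+\varepsilon m_im_j$, $m^i=g^{ij}m_j$, so $\ell^i\ell_i=1$, $\ell^im_i=0$, $m^im_i=\varepsilon$. The main scalar $\mathcal I$ ($h(0)$) is defined by $FC_{ijk}=\mathcal I\,m_im_jm_k$, where $C_{ijk}=\frac14\dot\partial_i\dot\partial_j\dot\partial_kF^2$. The geodesic spray of $F$ is $S=y^i\partial_i-2G^i\dot\partial_i$; $G^i_j=\dot\partial_jG^i$, $\delta_i=\partial_i-G^j_i\dot\partial_j$. For a smooth function $f$: $f_{;1}=y^i\dot\partial_if$, $f_{;2}=\varepsilon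 Fm^i\dot\partial_if$, $f_{,1}=\ell^i\delta_if$, $f_{,2}=\varepsilon m^i\delta_if$; iterated derivatives are read left to right, e.g. $f_{;2;2}=(f_{;2})_{;2}$. $f$ is horizontally constant if $\delta_if=0$ (i.e. $f_{,1}=f_{,2}=0$). $F$ is Landsberg if $\mathcal I_{,1}=0$. *)

theory Defs
  imports "HOL-Analysis.Analysis"
begin

text \<open>The base manifold is (a chart domain) in R^2,
  points of TM are pairs (x,y) with x, y :: real^2; functions on TM_0 are
  curried functions real^2 => real^2 => real, considered on a conic set A.\<close>

type_synonym fn = "real^2 \<Rightarrow> real^2 \<Rightarrow> real"

definition dx :: "2 \<Rightarrow> fn \<Rightarrow> fn" where
  "dx i f = (\<lambda>x y. deriv (\<lambda>t. f (x + t *\<^sub>R axis i 1) y) 0)"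

definition dy :: "2 \<Rightarrow> fn \<Rightarrow> fn" where
  "dy i f = (\<lambda>x y. deriv (\<lambda>t. f x (y + t *\<^sub>R axis i 1)) 0)"

definition pdir :: "bool \<times> 2 \<Rightarrow> fn \<Rightarrow> fn" where
  "pdir d f = (if fst d then dy (snd d) f else dx (snd d) f)"

definition smooth_on_TM :: "((real^2) \<times> (real^2)) set \<Rightarrow> fn \<Rightarrow> bool" where
  "smooth_on_TM A f \<longleftrightarrow>
     (\<forall>ds p. p \<in> A \<longrightarrow> (\<lambda>q. foldr pdir ds f (fst q) (snd q)) differentiable (at p))"

definition conic_subbundle :: "((real^2) \<times> (real^2)) set \<Rightarrow> bool" where
  "conic_subbundle A \<longleftrightarrow> open A \<and> (\<forall>(x,y)\<in>A. y \<noteq> 0) \<and>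
     (\<forall>(x,y)\<in>A. \<forall>c::real. c > 0 \<longrightarrow> (x, c *\<^sub>R y) \<in> A)"

definition homog :: "real \<Rightarrow> ((real^2) \<times> (real^2)) set \<Rightarrow> fn \<Rightarrow> bool" where
  "homog r A f \<longleftrightarrow> (\<forall>(x,y)\<in>A. \<forall>c::real. c > 0 \<longrightarrow> f x (c *\<^sub>R y) = c powr r * f x y)"

definition sqF :: "fn \<Rightarrow> fn" where
  "sqF F = (\<lambda>x y. (F x y)^2)"

definition gmet :: "fn \<Rightarrow> 2 \<Rightarrow> 2 \<Rightarrow> fn" where
  "gmet F i j = (\<lambda>x y. (1/2) * dy i (dy j (sqF F)) x y)"

definition gmat :: "fn \<Rightarrow> real^2 \<Rightarrow> real^2 \<Rightarrow> real^2^2" where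
  "gmat F x y = (\<chi> i j. gmet F i j x y)"

definition ginv :: "fn \<Rightarrow> 2 \<Rightarrow> 2 \<Rightarrow> fn" where
  "ginv F i j = (\<lambda>x y. matrix_inv (gmat F x y) $ i $ j)"

definition cartan :: "fn \<Rightarrow> 2 \<Rightarrow> 2 \<Rightarrow> 2 \<Rightarrow> fn" where
  "cartan F i j k = (\<lambda>x y. (1/4) * dy i (dy j (dy k (sqF F))) x y)"

definition conic_pseudo_finsler_surface :: "((real^2) \<times> (real^2)) set \<Rightarrow> fn \<Rightarrow> bool" where
  "conic_pseudo_finsler_surface A F \<longleftrightarrow> conic_subbundle A \<and> smooth_on_TM A F \<and> homog 1 A F \<and>
     (\<forall>(x,y)\<in>A. det (gmat F x y) \<noteq> 0)"

definition ell_low :: "fn \<Rightarrow> 2 \<Rightarrow> fn" where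
  "ell_low F i = dy i F"

definition ell_up :: "fn \<Rightarrow> 2 \<Rightarrow> fn" where
  "ell_up F i = (\<lambda>x y. y $ i / F x y)"

definition m_up :: "fn \<Rightarrow> (2 \<Rightarrow> fn) \<Rightarrow> 2 \<Rightarrow> fn" where
  "m_up F m i = (\<lambda>x y. \<Sum>j\<in>UNIV. ginv F i j x y * m j x y)"

definition berwald_frame :: "((real^2) \<times> (real^2)) set \<Rightarrow> fn \<Rightarrow> real \<Rightarrow> (2 \<Rightarrow> fn) \<Rightarrow> bool" where
  "berwald_frame A F eps m \<longleftrightarrow> (eps = 1 \<or> eps = -1) \<and> (\<forall>i. smooth_on_TM A (m i)) \<and>
     (\<forall>(x,y)\<in>A. \<forall>i j. gmet F i j x y = ell_low F i x y * ell_low F j x y + eps * m i x y * m j x y)"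

definition is_main_scalar :: "((real^2) \<times> (real^2)) set \<Rightarrow> fn \<Rightarrow> (2 \<Rightarrow> fn) \<Rightarrow> fn \<Rightarrow> bool" where
  "is_main_scalar A F m I \<longleftrightarrow>
     (\<forall>(x,y)\<in>A. \<forall>i j k. F x y * cartan F i j k x y = I x y * m i x y * m j x y * m k x y)"

text \<open>Geodesic spray coefficients G^i = 1/4 g^ik (y^j dot-d_k d_j F^2 - d_k F^2),
  so that S = y^i d_i - 2 G^i dot-d_i is the geodesic spray.\<close>
definition Gspray :: "fn \<Rightarrow> 2 \<Rightarrow> fn" where
  "Gspray F i = (\<lambda>x y. (1/4) * (\<Sum>k\<in>UNIV. ginv F i k x y *
      ((\<Sum>j\<in>UNIV. y $ j * dy k (dx j (sqF F)) x y) - dx k (sqF F) x y)))"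

definition Gconn :: "fn \<Rightarrow> 2 \<Rightarrow> 2 \<Rightarrow> fn" where
  "Gconn F i j = dy j (Gspray F i)"

definition hdelta :: "fn \<Rightarrow> 2 \<Rightarrow> fn \<Rightarrow> fn" where
  "hdelta F i f = (\<lambda>x y. dx i f x y - (\<Sum>j\<in>UNIV. Gconn F j i x y * dy j f x y))"

definition vd2 :: "fn \<Rightarrow> real \<Rightarrow> (2 \<Rightarrow> fn) \<Rightarrow> fn \<Rightarrow> fn" where
  "vd2 F eps m f = (\<lambda>x y. eps * F x y * (\<Sum>i\<in>UNIV. m_up F m i x y * dy i f x y))"

definition hd1 :: "fn \<Rightarrow> fn \<Rightarrow> fn" where
  "hd1 F f = (\<lambda>x y. \<Sum>i\<in>UNIV. ell_up F i x y * hdelta F i f x y)"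

definition hd2 :: "fn \<Rightarrow> real \<Rightarrow> (2 \<Rightarrow> fn) \<Rightarrow> fn \<Rightarrow> fn" where
  "hd2 F eps m f = (\<lambda>x y. eps * (\<Sum>i\<in>UNIV. m_up F m i x y * hdelta F i f x y))"

definition horiz_const :: "((real^2) \<times> (real^2)) set \<Rightarrow> fn \<Rightarrow> fn \<Rightarrow> bool" where
  "horiz_const A F f \<longleftrightarrow> (\<forall>(x,y)\<in>A. \<forall>i. hdelta F i f x y = 0)"

definition landsberg :: "((real^2) \<times> (real^2)) set \<Rightarrow> fn \<Rightarrow> fn \<Rightarrow> bool" where
  "landsberg A F I \<longleftrightarrow> (\<forall>(x,y)\<in>A. hd1 F I x y = 0)"

end

theory Submission
  imports Defs
begin

definition U :: "fn \<Rightarrow> ((real^2) \<times> (real^2)) \<Rightarrow> real" where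
  "U f = (\<lambda>q. f (fst q) (snd q))"

definition pd :: "((real^2) \<times> (real^2)) \<Rightarrow> fn \<Rightarrow> fn" where
  "pd v f = (\<lambda>x y. deriv (\<lambda>t. U f ((x,y) + t *\<^sub>R v)) 0)"

definition dvx :: "2 \<Rightarrow> (real^2) \<times> (real^2)" where "dvx i = (axis i 1, 0)"
definition dvy :: "2 \<Rightarrow> (real^2) \<times> (real^2)" where "dvy i = (0, axis i 1)"

lemma dx_pd: "dx i = pd (dvx i)"
  by (simp add: dx_def pd_def U_def dvx_def fun_eq_iff)

lemma dy_pd: "dy i = pd (dvy i)"
  by (simp add: dy_def pd_def U_def dvy_def fun_eq_iff)

lemma pdir_pd: "pdir d = pd (if fst d then dvy (snd d) else dvx (snd d))"
  by (simp add: pdir_def dx_pd dy_pd fun_eq_iff)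

lemma U_apply[simp]: "U f (x,y) = f x y" by (simp add: U_def)

lemma deriv_line:
  assumes "U f differentiable (at (q + s *\<^sub>R v))"
  shows "((\<lambda>t. U f (q + t *\<^sub>R v)) has_real_derivative frechet_derivative (U f) (at (q + s *\<^sub>R v)) v) (at s)"
proof -
  have l: "((\<lambda>t. q + t *\<^sub>R v) has_derivative (\<lambda>t. t *\<^sub>R v)) (at s)"
    by (auto intro!: derivative_eq_intros)
  have f: "(U f has_derivative frechet_derivative (U f) (at (q + s *\<^sub>R v))) (at (q + s *\<^sub>R v))"
    using assms frechet_derivative_works by blast
  have "((\<lambda>t. U f (q + t *\<^sub>R v)) has_derivative (\<lambda>t. frechet_derivative (U f) (at (q + s *\<^sub>R v)) (t *\<^sub>R v))) (at s)"
    using diff_chain_at[OF l f] by (simp add: o_def)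
  moreover have "linear (frechet_derivative (U f) (at (q + s *\<^sub>R v)))"
    using f has_derivative_linear by blast
  ultimately show ?thesis
    by (auto intro: has_derivative_imp_has_field_derivative simp: linear_scale)
qed

lemma pd_frechet:
  assumes "U f differentiable (at (x,y))"
  shows "pd v f x y = frechet_derivative (U f) (at (x,y)) v"
proof -
  have "((\<lambda>t. U f ((x,y) + t *\<^sub>R v)) has_real_derivative frechet_derivative (U f) (at (x,y)) v) (at 0)"
    using deriv_line[of f "(x,y)" 0 v] assms by simp
  then show ?thesis unfolding pd_def by (rule DERIV_imp_deriv)
qed

lemma pd_DERIV:
  assumes "U f differentiable (at (q + s *\<^sub>R v))"
  shows "((\<lambda>t. U f (q + t *\<^sub>R v)) has_real_derivative U (pd v f) (q + s *\<^sub>R v)) (at s)"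
proof -
  obtain a b where ab: "q + s *\<^sub>R v = (a,b)" by (cases "q + s *\<^sub>R v") auto
  show ?thesis
    using deriv_line[OF assms] pd_frechet[of f a b v] assms unfolding ab by simp
qed


definition eqA :: "((real^2) \<times> (real^2)) set \<Rightarrow> fn \<Rightarrow> fn \<Rightarrow> bool" where
  "eqA A f g \<longleftrightarrow> (\<forall>x y. (x,y) \<in> A \<longrightarrow> f x y = g x y)"

definition diffA :: "((real^2) \<times> (real^2)) set \<Rightarrow> fn \<Rightarrow> bool" where
  "diffA A f \<longleftrightarrow> (\<forall>p\<in>A. U f differentiable (at p))"

definition smn :: "((real^2) \<times> (real^2)) set \<Rightarrow> nat \<Rightarrow> fn \<Rightarrow> bool" where
  "smn A n f \<longleftrightarrow> (\<forall>ds. length ds \<le> n \<longrightarrow> diffA A (foldr pdir ds f))"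

lemma sm_iff_smn: "smooth_on_TM A f \<longleftrightarrow> (\<forall>n. smn A n f)"
  unfolding smooth_on_TM_def smn_def diffA_def U_def by auto

lemma smn_0: "smn A 0 f \<longleftrightarrow> diffA A f"
  unfolding smn_def by auto

lemma smn_Suc: "smn A (Suc n) f \<longleftrightarrow> diffA A f \<and> (\<forall>d. smn A n (pdir d f))"
proof
  assume h: "smn A (Suc n) f"
  show "diffA A f \<and> (\<forall>d. smn A n (pdir d f))"
  proof (intro conjI allI)
    show "diffA A f" using h[unfolded smn_def, rule_format, of "[]"] by simp
    fix d show "smn A n (pdir d f)" unfolding smn_def
    proof (intro allI impI)
      fix ds :: "(bool \<times> 2) list" assume "length ds \<le> n"
      then show "diffA A (foldr pdir ds (pdir d f))"
        using h[unfolded smn_def, rule_format, of "ds @ [d]"] by simp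
    qed
  qed
next
  assume h: "diffA A f \<and> (\<forall>d. smn A n (pdir d f))"
  show "smn A (Suc n) f" unfolding smn_def
  proof (intro allI impI)
    fix ds :: "(bool \<times> 2) list" assume l: "length ds \<le> Suc n"
    show "diffA A (foldr pdir ds f)"
    proof (cases ds rule: rev_cases)
      case Nil then show ?thesis using h by simp
    next
      case (snoc ds' d)
      then show ?thesis using h l unfolding smn_def by (cases d) auto
    qed
  qed
qed

lemma smn_mono: "smn A (Suc n) f \<Longrightarrow> smn A n f"
  unfolding smn_def by auto

lemma smn_diffA: "smn A n f \<Longrightarrow> diffA A f"
  unfolding smn_def by (metis foldr.simps(1) id_apply le0 list.size(3))

locale opn =
  fixes A :: "((real^2) \<times> (real^2)) set"
  assumes opnA: "open A"
begin

lemma line_ev: assumes "p \<in> A" shows "eventually (\<lambda>t. p + t *\<^sub>R v \<in> A) (nhds 0)"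
proof -
  obtain e where e: "e > 0" "ball p e \<subseteq> A" using opnA assms open_contains_ball by blast
  have "\<forall>t. dist t 0 < e / (norm v + 1) \<longrightarrow> p + t *\<^sub>R v \<in> A"
  proof (intro allI impI)
    fix t :: real assume "dist t 0 < e / (norm v + 1)"
    moreover have pos: "0 < norm v + 1" by (simp add: add_nonneg_pos)
    ultimately have "\<bar>t\<bar> * (norm v + 1) < e" by (simp add: pos_less_divide_eq)
    moreover have "norm (t *\<^sub>R v) \<le> \<bar>t\<bar> * (norm v + 1)"
      by (simp add: mult_left_mono)
    ultimately have "dist p (p + t *\<^sub>R v) < e" by (simp add: dist_norm)
    then show "p + t *\<^sub>R v \<in> A" using e by auto
  qed
  then show ?thesis unfolding eventually_nhds_metric using e
    by (intro exI[of _ "e / (norm v + 1)"]) (auto intro!: divide_pos_pos simp: add_nonneg_pos)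
qed

lemma pd_cong:
  assumes "eqA A f g" "(x,y) \<in> A"
  shows "pd v f x y = pd v g x y"
proof -
  have "eventually (\<lambda>t. U f ((x,y) + t *\<^sub>R v) = U g ((x,y) + t *\<^sub>R v)) (nhds 0)"
    using line_ev[OF assms(2), of v]
  proof (rule eventually_mono)
    fix t assume "(x, y) + t *\<^sub>R v \<in> A"
    then show "U f ((x, y) + t *\<^sub>R v) = U g ((x, y) + t *\<^sub>R v)"
      using assms(1) unfolding eqA_def U_def by (cases "(x, y) + t *\<^sub>R v") auto
  qed
  then show ?thesis unfolding pd_def by (rule deriv_cong_ev) simp
qed

lemma eqA_pd: "eqA A f g \<Longrightarrow> eqA A (pd v f) (pd v g)"
  using pd_cong unfolding eqA_def by blast

lemma eqA_pdir: "eqA A f g \<Longrightarrow> eqA A (pdir d f) (pdir d g)"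
  unfolding pdir_pd by (rule eqA_pd)

lemma diffA_cong: assumes "diffA A f" "eqA A f g" shows "diffA A g"
  unfolding diffA_def
proof
  fix p assume p: "p \<in> A"
  then obtain D where D: "(U f has_derivative D) (at p)" using assms(1) unfolding diffA_def differentiable_def by blast
  have "(U g has_derivative D) (at p)"
    by (rule has_derivative_transform_within_open[OF D opnA p]) (use assms(2) in \<open>auto simp: eqA_def U_def\<close>)
  then show "U g differentiable at p" unfolding differentiable_def by blast
qed

lemma smn_cong: "smn A n f \<Longrightarrow> eqA A f g \<Longrightarrow> smn A n g"
proof (induction n arbitrary: f g)
  case 0 then show ?case using diffA_cong by (simp add: smn_0)
next
  case (Suc n)
  then show ?case unfolding smn_Suc using diffA_cong eqA_pdir by blast
qed

lemma pd_DERIV0: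
  assumes "diffA A f" "(x,y) \<in> A"
  shows "((\<lambda>t. U f ((x,y) + t *\<^sub>R v)) has_real_derivative pd v f x y) (at 0)"
  using pd_DERIV[of f "(x,y)" 0 v] assms unfolding diffA_def by simp

lemma pd_add:
  assumes "diffA A f" "diffA A g" "(x,y) \<in> A"
  shows "pd v (\<lambda>x y. f x y + g x y) x y = pd v f x y + pd v g x y"
  unfolding pd_def[of v "\<lambda>x y. f x y + g x y"]
  by (rule DERIV_imp_deriv) (use DERIV_add[OF pd_DERIV0[OF assms(1,3)] pd_DERIV0[OF assms(2,3)]] in \<open>simp add: U_def\<close>)

lemma pd_diff:
  assumes "diffA A f" "diffA A g" "(x,y) \<in> A"
  shows "pd v (\<lambda>x y. f x y - g x y) x y = pd v f x y - pd v g x y"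
  unfolding pd_def[of v "\<lambda>x y. f x y - g x y"]
  by (rule DERIV_imp_deriv) (use DERIV_diff[OF pd_DERIV0[OF assms(1,3)] pd_DERIV0[OF assms(2,3)]] in \<open>simp add: U_def\<close>)

lemma pd_mult:
  assumes "diffA A f" "diffA A g" "(x,y) \<in> A"
  shows "pd v (\<lambda>x y. f x y * g x y) x y = pd v f x y * g x y + f x y * pd v g x y"
  unfolding pd_def[of v "\<lambda>x y. f x y * g x y"]
  by (rule DERIV_imp_deriv) (use DERIV_mult[OF pd_DERIV0[OF assms(1,3)] pd_DERIV0[OF assms(2,3)]] in \<open>simp add: U_def algebra_simps\<close>)

lemma pd_minus:
  assumes "diffA A f" "(x,y) \<in> A"
  shows "pd v (\<lambda>x y. - f x y) x y = - pd v f x y"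
  unfolding pd_def[of v "\<lambda>x y. - f x y"]
  by (rule DERIV_imp_deriv) (use DERIV_minus[OF pd_DERIV0[OF assms(1,2)]] in \<open>simp add: U_def\<close>)

lemma pd_const: "pd v (\<lambda>x y. c) x y = 0"
  unfolding pd_def U_def by simp

lemma pd_inverse:
  assumes "diffA A f" "(x,y) \<in> A" "f x y \<noteq> 0"
  shows "pd v (\<lambda>x y. inverse (f x y)) x y = - (pd v f x y * inverse (f x y) * inverse (f x y))"
  unfolding pd_def[of v "\<lambda>x y. inverse (f x y)"]
  by (rule DERIV_imp_deriv) (use DERIV_inverse_fun[OF pd_DERIV0[OF assms(1,2)]] assms(3) in \<open>simp add: U_def power2_eq_square mult.assoc\<close>)

lemma pd_ycoord: "pd v (\<lambda>x y. y $ j) x y = snd v $ j"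
proof -
  have "((\<lambda>t. U (\<lambda>x y. y $ j) ((x,y) + t *\<^sub>R v)) has_real_derivative snd v $ j) (at 0)"
    by (cases v) (auto simp: U_def intro!: derivative_eq_intros)
  then show ?thesis unfolding pd_def by (rule DERIV_imp_deriv)
qed

lemma pd_xcoord: "pd v (\<lambda>x y. x $ j) x y = fst v $ j"
proof -
  have "((\<lambda>t. U (\<lambda>x y. x $ j) ((x,y) + t *\<^sub>R v)) has_real_derivative fst v $ j) (at 0)"
    by (cases v) (auto simp: U_def intro!: derivative_eq_intros)
  then show ?thesis unfolding pd_def by (rule DERIV_imp_deriv)
qed

lemma diffA_add: "diffA A f \<Longrightarrow> diffA A g \<Longrightarrow> diffA A (\<lambda>x y. f x y + g x y)"
  unfolding diffA_def U_def by simp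
lemma diffA_diff: "diffA A f \<Longrightarrow> diffA A g \<Longrightarrow> diffA A (\<lambda>x y. f x y - g x y)"
  unfolding diffA_def U_def by simp
lemma diffA_mult: "diffA A f \<Longrightarrow> diffA A g \<Longrightarrow> diffA A (\<lambda>x y. f x y * g x y)"
  unfolding diffA_def U_def by simp
lemma diffA_minus: "diffA A f \<Longrightarrow> diffA A (\<lambda>x y. - f x y)"
  unfolding diffA_def U_def by simp
lemma diffA_const: "diffA A (\<lambda>x y. c)"
  unfolding diffA_def U_def by simp
lemma diffA_inverse: "diffA A f \<Longrightarrow> (\<forall>x y. (x,y) \<in> A \<longrightarrow> f x y \<noteq> 0) \<Longrightarrow> diffA A (\<lambda>x y. inverse (f x y))"
  unfolding diffA_def U_def by (auto intro!: differentiable_inverse)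
lemma diffA_ycoord: "diffA A (\<lambda>x y. y $ j)"
  unfolding diffA_def U_def by (auto intro!: derivative_intros bounded_linear_imp_differentiable bounded_linear_compose[OF bounded_linear_vec_nth bounded_linear_snd])
lemma diffA_xcoord: "diffA A (\<lambda>x y. x $ j)"
  unfolding diffA_def U_def by (auto intro!: derivative_intros bounded_linear_imp_differentiable bounded_linear_compose[OF bounded_linear_vec_nth bounded_linear_fst])

lemma smn_ops:
  "smn A n f \<Longrightarrow> smn A n g \<Longrightarrow> smn A n (\<lambda>x y. f x y + g x y) \<and> smn A n (\<lambda>x y. f x y - g x y)
     \<and> smn A n (\<lambda>x y. f x y * g x y)"
proof (induction n arbitrary: f g)
  case 0 then show ?case by (simp add: smn_0 diffA_add diffA_mult diffA_diff)
next
  case (Suc n)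
  have f: "diffA A f" "\<And>d. smn A n (pdir d f)" "smn A n f" using Suc.prems(1) smn_Suc smn_mono by blast+
  have g: "diffA A g" "\<And>d. smn A n (pdir d g)" "smn A n g" using Suc.prems(2) smn_Suc smn_mono by blast+
  have "smn A n (pdir d (\<lambda>x y. f x y + g x y))" for d
    using Suc.IH[OF f(2)[of d] g(2)[of d]] unfolding pdir_pd
    by (elim conjE smn_cong) (auto simp: eqA_def pd_add f g)
  moreover have "smn A n (pdir d (\<lambda>x y. f x y - g x y))" for d
    using Suc.IH[OF f(2)[of d] g(2)[of d]] unfolding pdir_pd
    by (elim conjE smn_cong) (auto simp: eqA_def pd_diff f g)
  moreover have "smn A n (pdir d (\<lambda>x y. f x y * g x y))" for d
  proof -
    have "smn A n (\<lambda>x y. pdir d f x y * g x y + f x y * pdir d g x y)"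
      using Suc.IH[OF f(2)[of d] g(3)] Suc.IH[OF f(3) g(2)[of d]] Suc.IH
      by blast
    then show ?thesis unfolding pdir_pd
      by (elim smn_cong) (auto simp: eqA_def pd_mult f g)
  qed
  ultimately show ?case
    by (simp add: smn_Suc f g diffA_add diffA_mult diffA_diff)
qed

lemma smn_const: "smn A n (\<lambda>x y. c)"
proof (induction n arbitrary: c)
  case 0 then show ?case by (simp add: smn_0 diffA_const)
next
  case (Suc n)
  have "pdir d (\<lambda>x y. c) = (\<lambda>x y. 0)" for d unfolding pdir_pd by (simp add: fun_eq_iff pd_const)
  then show ?case using Suc by (simp add: smn_Suc diffA_const)
qed

lemma smn_ycoord: "smn A n (\<lambda>x y. y $ j)"
proof (cases n)
  case 0 then show ?thesis by (simp add: smn_0 diffA_ycoord)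
next
  case (Suc k)
  have "pdir d (\<lambda>x y. y $ j) = (\<lambda>x y. snd (if fst d then dvy (snd d) else dvx (snd d)) $ j)" for d
    unfolding pdir_pd by (simp add: fun_eq_iff pd_ycoord)
  then show ?thesis using Suc by (simp add: smn_Suc diffA_ycoord smn_const)
qed

lemma smn_xcoord: "smn A n (\<lambda>x y. x $ j)"
proof (cases n)
  case 0 then show ?thesis by (simp add: smn_0 diffA_xcoord)
next
  case (Suc k)
  have "pdir d (\<lambda>x y. x $ j) = (\<lambda>x y. fst (if fst d then dvy (snd d) else dvx (snd d)) $ j)" for d
    unfolding pdir_pd by (simp add: fun_eq_iff pd_xcoord)
  then show ?thesis using Suc by (simp add: smn_Suc diffA_xcoord smn_const)
qed

lemma smn_inverse:
  "smn A n f \<Longrightarrow> (\<forall>x y. (x,y) \<in> A \<longrightarrow> f x y \<noteq> 0) \<Longrightarrow> smn A n (\<lambda>x y. inverse (f x y))"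
proof (induction n arbitrary: f)
  case 0 then show ?case by (simp add: smn_0 diffA_inverse)
next
  case (Suc n)
  have f: "diffA A f" "\<And>d. smn A n (pdir d f)" "smn A n f" using Suc.prems(1) smn_Suc smn_mono by blast+
  have i: "smn A n (\<lambda>x y. inverse (f x y))" using Suc.IH[OF f(3) Suc.prems(2)] .
  have "smn A n (pdir d (\<lambda>x y. inverse (f x y)))" for d
  proof -
    have "smn A n (\<lambda>x y. (0::real) - pdir d f x y * inverse (f x y) * inverse (f x y))"
      using smn_ops[OF f(2) i] smn_ops[OF _ i] smn_ops[OF smn_const] by blast
    then show ?thesis unfolding pdir_pd
      by (elim smn_cong) (use Suc.prems(2) in \<open>auto simp: eqA_def pd_inverse f\<close>)
  qed
  then show ?case using f Suc.prems(2) by (simp add: smn_Suc diffA_inverse)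
qed

lemma smn_pdir: "smn A (Suc n) f \<Longrightarrow> smn A n (pdir d f)"
  using smn_Suc by blast

end

context opn
begin

lemma DERIV_lineA:
  assumes "diffA A g" "q + s *\<^sub>R v \<in> A"
  shows "((\<lambda>t. U g (q + t *\<^sub>R v)) has_real_derivative U (pd v g) (q + s *\<^sub>R v)) (at s)"
  using pd_DERIV[of g q s v] assms unfolding diffA_def by blast

lemma mixed_mvt:
  assumes df: "diffA A f" and dv: "diffA A (pd v f)"
    and r: "ball p r \<subseteq> A" and s: "0 < s" "s * (norm v + norm w) < r"
  shows "\<exists>a b. 0 < a \<and> a < s \<and> 0 < b \<and> b < s \<and>
     U f (p + s *\<^sub>R v + s *\<^sub>R w) - U f (p + s *\<^sub>R v) - U f (p + s *\<^sub>R w) + U f p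
       = s * s * U (pd w (pd v f)) (p + a *\<^sub>R v + b *\<^sub>R w)"
proof -
  have inA: "p + a *\<^sub>R v + b *\<^sub>R w \<in> A" if "0 \<le> a" "a \<le> s" "0 \<le> b" "b \<le> s" for a b
  proof -
    have "norm (a *\<^sub>R v + b *\<^sub>R w) \<le> a * norm v + b * norm w"
      using norm_triangle_ineq[of "a *\<^sub>R v" "b *\<^sub>R w"] that by simp
    also have "\<dots> \<le> s * norm v + s * norm w"
      using that by (intro add_mono mult_right_mono) auto
    finally have "norm (a *\<^sub>R v + b *\<^sub>R w) < r" using s by (simp add: distrib_left)
    then have "dist (p + (a *\<^sub>R v + b *\<^sub>R w)) p < r" by (simp add: dist_norm)
    then have "p + a *\<^sub>R v + b *\<^sub>R w \<in> ball p r" by (simp add: dist_commute add.assoc)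
    then show ?thesis using r by blast
  qed
  define phi where "phi t = U f ((p + s *\<^sub>R w) + t *\<^sub>R v) - U f (p + t *\<^sub>R v)" for t
  have "DERIV phi t :> U (pd v f) ((p + s *\<^sub>R w) + t *\<^sub>R v) - U (pd v f) (p + t *\<^sub>R v)"
    if "0 \<le> t" "t \<le> s" for t
    unfolding phi_def
    using inA[of t s] inA[of t 0] that s
    by (intro DERIV_diff DERIV_lineA df) (auto simp: algebra_simps)
  from MVT2[OF s(1) this] obtain a where a: "0 < a" "a < s"
    "phi s - phi 0 = (s - 0) * (U (pd v f) ((p + s *\<^sub>R w) + a *\<^sub>R v) - U (pd v f) (p + a *\<^sub>R v))"
    by blast
  define psi where "psi u = U (pd v f) ((p + a *\<^sub>R v) + u *\<^sub>R w)" for u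
  have "DERIV psi u :> U (pd w (pd v f)) ((p + a *\<^sub>R v) + u *\<^sub>R w)" if "0 \<le> u" "u \<le> s" for u
    unfolding psi_def using inA[of a u] that a by (intro DERIV_lineA dv) auto
  from MVT2[OF s(1) this] obtain b where b: "0 < b" "b < s"
    "psi s - psi 0 = (s - 0) * U (pd w (pd v f)) ((p + a *\<^sub>R v) + b *\<^sub>R w)"
    by blast
  have "U f (p + s *\<^sub>R v + s *\<^sub>R w) - U f (p + s *\<^sub>R v) - U f (p + s *\<^sub>R w) + U f p = phi s - phi 0"
    unfolding phi_def by (simp add: algebra_simps)
  also have "\<dots> = s * (psi s - psi 0)" using a(3) unfolding psi_def by (simp add: algebra_simps)
  also have "\<dots> = s * s * U (pd w (pd v f)) (p + a *\<^sub>R v + b *\<^sub>R w)" using b(3) by simp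
  finally show ?thesis using a b by blast
qed

lemma schwarz_gen:
  assumes df: "diffA A f" and dv: "diffA A (pd v f)" and dw: "diffA A (pd w f)"
    and dvw: "diffA A (pd w (pd v f))" and dwv: "diffA A (pd v (pd w f))"
    and p: "p \<in> A"
  shows "U (pd w (pd v f)) p = U (pd v (pd w f)) p"
proof (rule ccontr)
  let ?H1 = "U (pd w (pd v f))" and ?H2 = "U (pd v (pd w f))"
  assume ne: "?H1 p \<noteq> ?H2 p"
  define e where "e = \<bar>?H1 p - ?H2 p\<bar> / 2"
  have e: "e > 0" using ne by (simp add: e_def)
  obtain r where r: "r > 0" "ball p r \<subseteq> A" using opnA p open_contains_ball by blast
  have c1: "continuous (at p) ?H1" using dvw p unfolding diffA_def
    using differentiable_imp_continuous_within by blast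
  have c2: "continuous (at p) ?H2" using dwv p unfolding diffA_def
    using differentiable_imp_continuous_within by blast
  obtain d1 where d1: "d1 > 0" "\<forall>q. dist q p < d1 \<longrightarrow> dist (?H1 q) (?H1 p) < e"
    using c1 e unfolding continuous_at_eps_delta by blast
  obtain d2 where d2: "d2 > 0" "\<forall>q. dist q p < d2 \<longrightarrow> dist (?H2 q) (?H2 p) < e"
    using c2 e unfolding continuous_at_eps_delta by blast
  define K where "K = norm v + norm w + 1"
  have K: "K > 0" "norm v + norm w < K" unfolding K_def by (auto simp: add_nonneg_pos)
  define s where "s = min r (min d1 d2) / (2 * K)"
  have s0: "s > 0" using r d1 d2 K by (simp add: s_def)
  have m: "min r (min d1 d2) > 0" using r d1 d2 by simp
  have "s * K = min r (min d1 d2) / 2" using K unfolding s_def by (simp add: field_simps)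
  then have sK: "s * K < min r (min d1 d2)" using m by linarith
  have sK2: "s * (norm v + norm w) \<le> s * K" using K s0 by (intro mult_left_mono) auto
  have close: "dist (p + a *\<^sub>R v + b *\<^sub>R w) p < min r (min d1 d2)"
    if "0 < a" "a < s" "0 < b" "b < s" for a b
  proof -
    have "norm (a *\<^sub>R v + b *\<^sub>R w) \<le> a * norm v + b * norm w"
      using norm_triangle_ineq[of "a *\<^sub>R v" "b *\<^sub>R w"] that by simp
    also have "\<dots> \<le> s * norm v + s * norm w"
      using that by (intro add_mono mult_right_mono) auto
    finally have "norm (a *\<^sub>R v + b *\<^sub>R w) < min r (min d1 d2)" using sK sK2 by (simp add: distrib_left)
    then show ?thesis by (simp add: dist_norm add.assoc)
  qed
  obtain a b where ab: "0 < a" "a < s" "0 < b" "b < s"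
    "U f (p + s *\<^sub>R v + s *\<^sub>R w) - U f (p + s *\<^sub>R v) - U f (p + s *\<^sub>R w) + U f p
       = s * s * ?H1 (p + a *\<^sub>R v + b *\<^sub>R w)"
    using mixed_mvt[OF df dv r(2) s0, of w] sK sK2 by auto
  obtain a' b' where ab': "0 < a'" "a' < s" "0 < b'" "b' < s"
    "U f (p + s *\<^sub>R w + s *\<^sub>R v) - U f (p + s *\<^sub>R w) - U f (p + s *\<^sub>R v) + U f p
       = s * s * ?H2 (p + a' *\<^sub>R w + b' *\<^sub>R v)"
    using mixed_mvt[OF df dw r(2) s0, of v] sK sK2 by (auto simp: add.commute)
  have "U f (p + s *\<^sub>R w + s *\<^sub>R v) = U f (p + s *\<^sub>R v + s *\<^sub>R w)" by (simp add: algebra_simps)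
  then have eq: "?H1 (p + a *\<^sub>R v + b *\<^sub>R w) = ?H2 (p + a' *\<^sub>R w + b' *\<^sub>R v)"
    using ab(5) ab'(5) s0 by (simp add: algebra_simps)
  have "dist (?H1 (p + a *\<^sub>R v + b *\<^sub>R w)) (?H1 p) < e"
    using d1(2)[rule_format, of "p + a *\<^sub>R v + b *\<^sub>R w"] close[OF ab(1-4)] by simp
  moreover have "dist (?H2 (p + a' *\<^sub>R w + b' *\<^sub>R v)) (?H2 p) < e"
    using d2(2)[rule_format, of "p + a' *\<^sub>R w + b' *\<^sub>R v"] close[OF ab'(3,4,1,2)] by (simp add: algebra_simps)
  ultimately have "\<bar>?H1 p - ?H2 p\<bar> < 2 * e" using eq by (simp add: dist_real_def)
  then show False by (simp add: e_def)
qed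

lemma diffA_pdir_smn: "smn A (Suc n) f \<Longrightarrow> diffA A (pdir d f)"
  using smn_Suc smn_diffA by blast

lemma schwarz:
  assumes "smooth_on_TM A f" "(x,y) \<in> A"
  shows "pdir a (pdir b f) x y = pdir b (pdir a f) x y"
proof -
  have s: "smn A n f" for n using assms(1) sm_iff_smn by blast
  have d1: "diffA A (pdir a f)" "diffA A (pdir b f)" using diffA_pdir_smn[OF s[of "Suc 0"]] by auto
  have d2: "diffA A (pdir a (pdir b f))" "diffA A (pdir b (pdir a f))"
    using diffA_pdir_smn[OF smn_pdir[OF s[of "Suc (Suc 0)"]]] by (auto simp: numeral_2_eq_2)
  show ?thesis
    using schwarz_gen[OF smn_diffA[OF s[of 0]], of "if fst b then dvy (snd b) else dvx (snd b)"
        "if fst a then dvy (snd a) else dvx (snd a)" "(x,y)"] d1 d2 assms(2)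
    unfolding pdir_pd by simp
qed

end

context opn
begin

abbreviation sm where "sm \<equiv> smooth_on_TM A"

lemma sm_smn: "sm f \<Longrightarrow> smn A n f" using sm_iff_smn by blast
lemma sm_diffA: "sm f \<Longrightarrow> diffA A f" using sm_smn smn_diffA by blast

lemma sm_add[simp]: "sm f \<Longrightarrow> sm g \<Longrightarrow> sm (\<lambda>x y. f x y + g x y)"
  using smn_ops sm_iff_smn by blast
lemma sm_diff[simp]: "sm f \<Longrightarrow> sm g \<Longrightarrow> sm (\<lambda>x y. f x y - g x y)"
  using smn_ops sm_iff_smn by blast
lemma sm_mult[simp]: "sm f \<Longrightarrow> sm g \<Longrightarrow> sm (\<lambda>x y. f x y * g x y)"
  using smn_ops sm_iff_smn by blast
lemma sm_const[simp]: "sm (\<lambda>x y. c)"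
  using smn_const sm_iff_smn by blast
lemma sm_ycoord[simp]: "sm (\<lambda>x y. y $ j)"
  using smn_ycoord sm_iff_smn by blast
lemma sm_minus[simp]: "sm f \<Longrightarrow> sm (\<lambda>x y. - f x y)"
  using sm_diff[OF sm_const[of 0] , of f] by simp
lemma sm_inverse: "sm f \<Longrightarrow> (\<forall>x y. (x,y) \<in> A \<longrightarrow> f x y \<noteq> 0) \<Longrightarrow> sm (\<lambda>x y. inverse (f x y))"
  using smn_inverse sm_iff_smn by blast
lemma sm_divide: "sm f \<Longrightarrow> sm g \<Longrightarrow> (\<forall>x y. (x,y) \<in> A \<longrightarrow> g x y \<noteq> 0) \<Longrightarrow> sm (\<lambda>x y. f x y / g x y)"
  using sm_mult[OF _ sm_inverse, of f g] by (simp add: divide_inverse)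
lemma sm_pow2[simp]: "sm f \<Longrightarrow> sm (\<lambda>x y. (f x y)^2)"
  using sm_mult[of f f] by (simp add: power2_eq_square)
lemma sm_sum2[simp]: "(\<And>k. sm (h k)) \<Longrightarrow> sm (\<lambda>x y. \<Sum>k\<in>(UNIV::2 set). h k x y)"
  unfolding sum_2 by (rule sm_add) auto
lemma sm_pdir: "sm f \<Longrightarrow> sm (pdir d f)"
  using smn_pdir sm_iff_smn by blast
lemma sm_dx[simp]: "sm f \<Longrightarrow> sm (dx i f)"
  using sm_pdir[of f "(False, i)"] by (simp add: pdir_def)
lemma sm_dy[simp]: "sm f \<Longrightarrow> sm (dy i f)"
  using sm_pdir[of f "(True, i)"] by (simp add: pdir_def)
lemma sm_cong: "sm f \<Longrightarrow> eqA A f g \<Longrightarrow> sm g"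
  using smn_cong sm_iff_smn by blast

lemma dx_cong: "eqA A f g \<Longrightarrow> (x,y) \<in> A \<Longrightarrow> dx i f x y = dx i g x y"
  unfolding dx_pd by (rule pd_cong)
lemma dy_cong: "eqA A f g \<Longrightarrow> (x,y) \<in> A \<Longrightarrow> dy i f x y = dy i g x y"
  unfolding dy_pd by (rule pd_cong)
lemma dy_zero: "(\<And>x y. (x,y) \<in> A \<Longrightarrow> f x y = 0) \<Longrightarrow> (x,y) \<in> A \<Longrightarrow> dy i f x y = 0"
  using dy_cong[of f "\<lambda>x y. 0" x y i] pd_const unfolding eqA_def dy_pd by simp
lemma dx_zero: "(\<And>x y. (x,y) \<in> A \<Longrightarrow> f x y = 0) \<Longrightarrow> (x,y) \<in> A \<Longrightarrow> dx i f x y = 0"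
  using dx_cong[of f "\<lambda>x y. 0" x y i] pd_const unfolding eqA_def dx_pd by simp

lemma dx_add[simp]: "sm f \<Longrightarrow> sm g \<Longrightarrow> (x,y) \<in> A \<Longrightarrow> dx i (\<lambda>x y. f x y + g x y) x y = dx i f x y + dx i g x y"
  unfolding dx_pd by (rule pd_add) (auto simp: sm_diffA)
lemma dy_add[simp]: "sm f \<Longrightarrow> sm g \<Longrightarrow> (x,y) \<in> A \<Longrightarrow> dy i (\<lambda>x y. f x y + g x y) x y = dy i f x y + dy i g x y"
  unfolding dy_pd by (rule pd_add) (auto simp: sm_diffA)
lemma dx_diff[simp]: "sm f \<Longrightarrow> sm g \<Longrightarrow> (x,y) \<in> A \<Longrightarrow> dx i (\<lambda>x y. f x y - g x y) x y = dx i f x y - dx i g x y"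
  unfolding dx_pd by (rule pd_diff) (auto simp: sm_diffA)
lemma dy_diff[simp]: "sm f \<Longrightarrow> sm g \<Longrightarrow> (x,y) \<in> A \<Longrightarrow> dy i (\<lambda>x y. f x y - g x y) x y = dy i f x y - dy i g x y"
  unfolding dy_pd by (rule pd_diff) (auto simp: sm_diffA)
lemma dx_mult[simp]: "sm f \<Longrightarrow> sm g \<Longrightarrow> (x,y) \<in> A \<Longrightarrow> dx i (\<lambda>x y. f x y * g x y) x y = dx i f x y * g x y + f x y * dx i g x y"
  unfolding dx_pd by (rule pd_mult) (auto simp: sm_diffA)
lemma dy_mult[simp]: "sm f \<Longrightarrow> sm g \<Longrightarrow> (x,y) \<in> A \<Longrightarrow> dy i (\<lambda>x y. f x y * g x y) x y = dy i f x y * g x y + f x y * dy i g x y"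
  unfolding dy_pd by (rule pd_mult) (auto simp: sm_diffA)
lemma dx_minus[simp]: "sm f \<Longrightarrow> (x,y) \<in> A \<Longrightarrow> dx i (\<lambda>x y. - f x y) x y = - dx i f x y"
  unfolding dx_pd by (rule pd_minus) (auto simp: sm_diffA)
lemma dy_minus[simp]: "sm f \<Longrightarrow> (x,y) \<in> A \<Longrightarrow> dy i (\<lambda>x y. - f x y) x y = - dy i f x y"
  unfolding dy_pd by (rule pd_minus) (auto simp: sm_diffA)
lemma dx_const[simp]: "dx i (\<lambda>x y. c) x y = 0"
  unfolding dx_pd by (rule pd_const)
lemma dy_const[simp]: "dy i (\<lambda>x y. c) x y = 0"
  unfolding dy_pd by (rule pd_const)
lemma dx_ycoord[simp]: "dx i (\<lambda>x y. y $ j) x y = 0"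
  unfolding dx_pd by (simp add: pd_ycoord dvx_def)
lemma dy_ycoord[simp]: "dy i (\<lambda>x y. y $ j) x y = (if j = i then 1 else 0)"
  unfolding dy_pd by (simp add: pd_ycoord dvy_def axis_def)
lemma dx_sum2[simp]: "(\<And>k. sm (h k)) \<Longrightarrow> (x,y) \<in> A \<Longrightarrow> dx i (\<lambda>x y. \<Sum>k\<in>(UNIV::2 set). h k x y) x y = (\<Sum>k\<in>UNIV. dx i (h k) x y)"
  unfolding sum_2 by (subst dx_add) auto
lemma dy_sum2[simp]: "(\<And>k. sm (h k)) \<Longrightarrow> (x,y) \<in> A \<Longrightarrow> dy i (\<lambda>x y. \<Sum>k\<in>(UNIV::2 set). h k x y) x y = (\<Sum>k\<in>UNIV. dy i (h k) x y)"
  unfolding sum_2 by (subst dy_add) auto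
lemma dx_pow2[simp]: "sm f \<Longrightarrow> (x,y) \<in> A \<Longrightarrow> dx i (\<lambda>x y. (f x y)^2) x y = 2 * f x y * dx i f x y"
  using dx_mult[of f f] by (simp add: power2_eq_square)
lemma dy_pow2[simp]: "sm f \<Longrightarrow> (x,y) \<in> A \<Longrightarrow> dy i (\<lambda>x y. (f x y)^2) x y = 2 * f x y * dy i f x y"
  using dy_mult[of f f] by (simp add: power2_eq_square)
lemma dx_inverse: "sm f \<Longrightarrow> (x,y) \<in> A \<Longrightarrow> f x y \<noteq> 0 \<Longrightarrow> dx i (\<lambda>x y. inverse (f x y)) x y = - (dx i f x y * inverse (f x y) * inverse (f x y))"
  unfolding dx_pd by (rule pd_inverse) (auto simp: sm_diffA)
lemma dy_inverse: "sm f \<Longrightarrow> (x,y) \<in> A \<Longrightarrow> f x y \<noteq> 0 \<Longrightarrow> dy i (\<lambda>x y. inverse (f x y)) x y = - (dy i f x y * inverse (f x y) * inverse (f x y))"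
  unfolding dy_pd by (rule pd_inverse) (auto simp: sm_diffA)

lemma dx_dy_comm: "sm f \<Longrightarrow> (x,y) \<in> A \<Longrightarrow> dx i (dy j f) x y = dy j (dx i f) x y"
  using schwarz[of f x y "(False,i)" "(True,j)"] by (simp add: pdir_def)
lemma dy_dy_comm: "sm f \<Longrightarrow> (x,y) \<in> A \<Longrightarrow> dy i (dy j f) x y = dy j (dy i f) x y"
  using schwarz[of f x y "(True,i)" "(True,j)"] by (simp add: pdir_def)
lemma dx_dx_comm: "sm f \<Longrightarrow> (x,y) \<in> A \<Longrightarrow> dx i (dx j f) x y = dx j (dx i f) x y"
  using schwarz[of f x y "(False,i)" "(False,j)"] by (simp add: pdir_def)

lemma eqA_dy_dy: "sm f \<Longrightarrow> eqA A (dy i (dy j f)) (dy j (dy i f))"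
  unfolding eqA_def using dy_dy_comm by blast
lemma eqA_dx_dy: "sm f \<Longrightarrow> eqA A (dx i (dy j f)) (dy j (dx i f))"
  unfolding eqA_def using dx_dy_comm by blast

definition eul :: "fn \<Rightarrow> fn" where
  "eul h = (\<lambda>x y. \<Sum>k\<in>UNIV. y $ k * dy k h x y)"

definition hom :: "real \<Rightarrow> fn \<Rightarrow> bool" where
  "hom r h \<longleftrightarrow> (\<forall>x y. (x,y) \<in> A \<longrightarrow> eul h x y = r * h x y)"

lemma sm_eul[simp]: "sm h \<Longrightarrow> sm (eul h)"
  unfolding eul_def by simp

lemma hom_dy:
  assumes h: "sm h" "hom r h" shows "hom (r - 1) (dy j h)"
  unfolding hom_def
proof (intro allI impI)
  fix x y assume p: "(x,y) \<in> A"
  have z: "dy j (\<lambda>x y. eul h x y - r * h x y) x y = 0"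
    by (rule dy_zero[OF _ p]) (use h(2) in \<open>auto simp: hom_def\<close>)
  have "dy j (\<lambda>x y. eul h x y - r * h x y) x y = dy j h x y + eul (dy j h) x y - r * dy j h x y"
    using p h(1) exhaust_2[of j] by (auto simp add: eul_def sum_2 dy_dy_comm[of h x y j])
  then show "eul (dy j h) x y = (r - 1) * dy j h x y" using z by (simp add: algebra_simps)
qed

lemma hom_dx:
  assumes h: "sm h" "hom r h" shows "hom r (dx j h)"
  unfolding hom_def
proof (intro allI impI)
  fix x y assume p: "(x,y) \<in> A"
  have z: "dx j (\<lambda>x y. eul h x y - r * h x y) x y = 0"
    by (rule dx_zero[OF _ p]) (use h(2) in \<open>auto simp: hom_def\<close>)
  have "dx j (\<lambda>x y. eul h x y - r * h x y) x y = eul (dx j h) x y - r * dx j h x y"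
    using p h(1) by (simp add: eul_def sum_2 dx_dy_comm[of h x y])
  then show "eul (dx j h) x y = r * dx j h x y" using z by (simp add: algebra_simps)
qed

lemma eul_add: "sm f \<Longrightarrow> sm g \<Longrightarrow> (x,y) \<in> A \<Longrightarrow> eul (\<lambda>x y. f x y + g x y) x y = eul f x y + eul g x y"
  unfolding eul_def by (simp add: sum_2 algebra_simps)
lemma eul_diff: "sm f \<Longrightarrow> sm g \<Longrightarrow> (x,y) \<in> A \<Longrightarrow> eul (\<lambda>x y. f x y - g x y) x y = eul f x y - eul g x y"
  unfolding eul_def by (simp add: sum_2 algebra_simps)
lemma eul_mult: "sm f \<Longrightarrow> sm g \<Longrightarrow> (x,y) \<in> A \<Longrightarrow> eul (\<lambda>x y. f x y * g x y) x y = eul f x y * g x y + f x y * eul g x y"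
  unfolding eul_def by (simp add: sum_2 algebra_simps)

lemma hom_add: "sm f \<Longrightarrow> sm g \<Longrightarrow> hom r f \<Longrightarrow> hom r g \<Longrightarrow> hom r (\<lambda>x y. f x y + g x y)"
  unfolding hom_def by (simp add: eul_add algebra_simps)
lemma hom_diff: "sm f \<Longrightarrow> sm g \<Longrightarrow> hom r f \<Longrightarrow> hom r g \<Longrightarrow> hom r (\<lambda>x y. f x y - g x y)"
  unfolding hom_def by (simp add: eul_diff algebra_simps)
lemma hom_mult: "sm f \<Longrightarrow> sm g \<Longrightarrow> hom r f \<Longrightarrow> hom s g \<Longrightarrow> hom (r + s) (\<lambda>x y. f x y * g x y)"
  unfolding hom_def by (simp add: eul_mult algebra_simps)
lemma hom_const: "hom 0 (\<lambda>x y. c)"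
  unfolding hom_def eul_def by simp
lemma hom_ycoord: "hom 1 (\<lambda>x y. y $ j)"
  unfolding hom_def eul_def using exhaust_2[of j] by (auto simp: sum_2)
lemma hom_sum2: "(\<And>k. sm (h k)) \<Longrightarrow> (\<And>k. hom r (h k)) \<Longrightarrow> hom r (\<lambda>x y. \<Sum>k\<in>(UNIV::2 set). h k x y)"
  unfolding sum_2 by (rule hom_add) auto
lemma hom_inverse:
  assumes "sm f" "hom r f" "\<forall>x y. (x,y) \<in> A \<longrightarrow> f x y \<noteq> 0"
  shows "hom (- r) (\<lambda>x y. inverse (f x y))"
  using assms unfolding hom_def eul_def
  by (simp add: dy_inverse sum_2 algebra_simps) (simp add: field_simps flip: distrib_left)
lemma hom_cong: "hom r f \<Longrightarrow> sm f \<Longrightarrow> eqA A f g \<Longrightarrow> hom r g"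
  unfolding hom_def eul_def eqA_def using dy_cong[of f g] eqA_def by (metis (no_types, lifting) sum.cong)

end

context opn
begin

lemma vec2_decomp: "(0::real^2, y) = y $ 1 *\<^sub>R dvy 1 + y $ 2 *\<^sub>R dvy 2"
  unfolding dvy_def by (simp add: vec_eq_iff forall_2 axis_def)

lemma pd_eul:
  assumes "sm f" "(x,y) \<in> A"
  shows "pd (0, y) f x y = eul f x y"
proof -
  have d: "U f differentiable (at (x,y))" using sm_diffA[OF assms(1)] assms(2) unfolding diffA_def by blast
  then have lin: "linear (frechet_derivative (U f) (at (x,y)))"
    using frechet_derivative_works has_derivative_linear by blast
  have "pd (0, y) f x y = frechet_derivative (U f) (at (x,y)) (0, y)" by (rule pd_frechet[OF d])
  also have "\<dots> = y $ 1 * frechet_derivative (U f) (at (x,y)) (dvy 1) + y $ 2 * frechet_derivative (U f) (at (x,y)) (dvy 2)"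
    unfolding vec2_decomp using lin by (simp add: linear_add linear_scale)
  also have "\<dots> = eul f x y"
    unfolding eul_def sum_2 dy_pd using pd_frechet[OF d] by simp
  finally show ?thesis .
qed

lemma euler_homog:
  assumes f: "sm f" "homog r A f" and r: "r = 0 \<or> r = 1" and p: "(x,y) \<in> A"
  shows "eul f x y = r * f x y"
proof -
  have ev: "eventually (\<lambda>t. U f ((x,y) + t *\<^sub>R (0, y)) = (1 + r * t) * f x y) (nhds 0)"
    unfolding eventually_nhds_metric
  proof (intro exI[of _ 1] conjI allI impI)
    fix t :: real assume "dist t 0 < 1"
    then have t: "1 + t > 0" by (simp add: dist_real_def)
    have "U f ((x,y) + t *\<^sub>R (0, y)) = f x ((1 + t) *\<^sub>R y)" by (simp add: algebra_simps)
    also have "\<dots> = (1 + t) powr r * f x y" using f(2) p t unfolding homog_def by blast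
    also have "\<dots> = (1 + r * t) * f x y" using r t by auto
    finally show "U f ((x,y) + t *\<^sub>R (0, y)) = (1 + r * t) * f x y" .
  qed simp
  have "pd (0, y) f x y = deriv (\<lambda>t. (1 + r * t) * f x y) 0"
    unfolding pd_def by (rule deriv_cong_ev[OF ev refl])
  also have "\<dots> = r * f x y"
    by (rule DERIV_imp_deriv) (auto intro!: derivative_eq_intros)
  finally show ?thesis using pd_eul[OF f(1) p] by simp
qed

end

lemma two_ne[simp]: "(1::2) \<noteq> 2" "(2::2) \<noteq> 1"
  by (metis exhaust_2 num.simps(4) one_neq_zero zero_neq_numeral) +

lemma inv2:
  fixes M :: "real^2^2"
  assumes "det M \<noteq> 0"
  shows "matrix_inv M $ i $ j = ((if i = j then M$1$1 + M$2$2 else 0) - M$i$j) / det M"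
proof -
  define B :: "real^2^2" where "B = (\<chi> i j. ((if i = j then M$1$1 + M$2$2 else 0) - M$i$j) / det M)"
  have num1: "(\<Sum>k\<in>UNIV. M$i$k * ((if k = j then M$1$1 + M$2$2 else 0) - M$k$j)) = (if i = j then det M else 0)" for i j
    using exhaust_2[of i] exhaust_2[of j] by (auto simp: sum_2 det_2 algebra_simps)
  have num2: "(\<Sum>k\<in>UNIV. ((if i = k then M$1$1 + M$2$2 else 0) - M$i$k) * M$k$j) = (if i = j then det M else 0)" for i j
    using exhaust_2[of i] exhaust_2[of j] by (auto simp: sum_2 det_2 algebra_simps)
  have "(M ** B) $ i $ j = (\<Sum>k\<in>UNIV. M$i$k * ((if k = j then M$1$1 + M$2$2 else 0) - M$k$j)) / det M" for i j
    unfolding B_def matrix_matrix_mult_def by (simp add: sum_divide_distrib)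
  then have MB: "M ** B = mat 1" using assms unfolding num1 by (simp add: vec_eq_iff mat_def)
  have "(B ** M) $ i $ j = (\<Sum>k\<in>UNIV. ((if i = k then M$1$1 + M$2$2 else 0) - M$i$k) * M$k$j) / det M" for i j
    unfolding B_def matrix_matrix_mult_def by (simp add: sum_divide_distrib)
  then have BM: "B ** M = mat 1" using assms unfolding num2 by (simp add: vec_eq_iff mat_def)
  have "\<exists>A'. M ** A' = mat 1 \<and> A' ** M = mat 1" using MB BM by blast
  then have inv: "M ** matrix_inv M = mat 1 \<and> matrix_inv M ** M = mat 1"
    unfolding matrix_inv_def by (rule someI_ex)
  have "matrix_inv M = matrix_inv M ** (M ** B)" by (simp add: MB)
  also have "\<dots> = (matrix_inv M ** M) ** B" by (simp add: matrix_mul_assoc)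
  also have "\<dots> = B" using inv by simp
  finally show ?thesis unfolding B_def by simp
qed

lemma inv2_both:
  fixes M :: "real^2^2"
  assumes "det M \<noteq> 0"
  shows "M ** matrix_inv M = mat 1 \<and> matrix_inv M ** M = mat 1"
proof -
  have "invertible M" using assms invertible_det_nz by blast
  then show ?thesis unfolding invertible_def matrix_inv_def by (rule someI_ex)
qed

lemma inv2_props:
  fixes M :: "real^2^2"
  assumes "det M \<noteq> 0"
  shows "(\<Sum>k\<in>UNIV. M$i$k * matrix_inv M $ k $ j) = (if i = j then 1 else 0)"
    "(\<Sum>k\<in>UNIV. matrix_inv M $ i $ k * M $ k $ j) = (if i = j then 1 else 0)"
proof -
  have "(M ** matrix_inv M) $ i $ j = mat 1 $ i $ j" "(matrix_inv M ** M) $ i $ j = mat 1 $ i $ j"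
    using inv2_both[OF assms] by simp_all
  then show "(\<Sum>k\<in>UNIV. M$i$k * matrix_inv M $ k $ j) = (if i = j then 1 else 0)"
    "(\<Sum>k\<in>UNIV. matrix_inv M $ i $ k * M $ k $ j) = (if i = j then 1 else 0)"
    unfolding matrix_matrix_mult_def mat_def by simp_all
qed

lemma lin2: "(a::real) * u + b * v = 0 \<Longrightarrow> c * u + d * v = 0 \<Longrightarrow> (a * d - b * c) * u = 0 \<and> (a * d - b * c) * v = 0"
  by algebra

context opn
begin
lemma sm_divc[simp]: "sm f \<Longrightarrow> sm (\<lambda>x y. f x y / c)"
  using sm_mult[OF _ sm_const, of f "inverse c"] by (simp add: divide_inverse)
lemma dx_divc[simp]: "sm f \<Longrightarrow> (x,y) \<in> A \<Longrightarrow> dx i (\<lambda>x y. f x y / c) x y = dx i f x y / c"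
  using dx_mult[OF _ sm_const, of f x y i "inverse c"] by (simp add: divide_inverse)
lemma dy_divc[simp]: "sm f \<Longrightarrow> (x,y) \<in> A \<Longrightarrow> dy i (\<lambda>x y. f x y / c) x y = dy i f x y / c"
  using dy_mult[OF _ sm_const, of f x y i "inverse c"] by (simp add: divide_inverse)
end

lemma alg_q1: "(y1::real)*l1 + y2*l2 = F \<Longrightarrow> y1*h11 + y2*h21 = 0 \<Longrightarrow> y1*h12 + y2*h22 = 0 \<Longrightarrow>
  (l1*l1+F*h11)*y1*y1 + (l1*l2+F*h12)*y1*y2 + ((l2*l1+F*h21)*y2*y1 + (l2*l2+F*h22)*y2*y2) = F*F"
proof -
  assume h: "y1*l1 + y2*l2 = F" "y1*h11 + y2*h21 = 0" "y1*h12 + y2*h22 = 0"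
  have "(l1*l1+F*h11)*y1*y1 + (l1*l2+F*h12)*y1*y2 + ((l2*l1+F*h21)*y2*y1 + (l2*l2+F*h22)*y2*y2)
     = (y1*l1 + y2*l2) * (y1*l1 + y2*l2) + F * (y1 * (y1*h11 + y2*h21) + y2 * (y1*h12 + y2*h22))"
    by (simp add: algebra_simps)
  then show ?thesis using h by simp
qed

lemma alg_aD: "(l1::real)*a + e*m1*b = m1 \<Longrightarrow> l2*a + e*m2*b = m2 \<Longrightarrow> (l1*m2 - l2*m1)*a = 0"
proof -
  assume h: "l1*a + e*m1*b = m1" "l2*a + e*m2*b = m2"
  have "(l1*m2 - l2*m1)*a = m2*(l1*a + e*m1*b) - m1*(l2*a + e*m2*b)" by (simp add: algebra_simps)
  then show ?thesis using h by simp
qed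

locale fins = opn +
  fixes F :: fn and eps :: real and m :: "2 \<Rightarrow> fn"
  assumes smF[simp]: "sm F"
    and homF: "homog 1 A F"
    and ynz: "\<And>x y. (x,y) \<in> A \<Longrightarrow> y \<noteq> 0"
    and detg: "\<And>x y. (x,y) \<in> A \<Longrightarrow> det (gmat F x y) \<noteq> 0"
    and epsv: "eps = 1 \<or> eps = -1"
    and smm[simp]: "\<And>i. sm (m i)"
    and frame: "\<And>x y i j. (x,y) \<in> A \<Longrightarrow> gmet F i j x y = dy i F x y * dy j F x y + eps * m i x y * m j x y"
begin

lemma eps2[simp]: "eps * eps = 1" using epsv by auto
lemma eps_nz[simp]: "eps \<noteq> 0" using epsv by auto

lemma eulF: "(x,y) \<in> A \<Longrightarrow> eul F x y = F x y"
  using euler_homog[OF smF homF, of x y] by simp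

lemma homF': "hom 1 F" unfolding hom_def using eulF by simp

abbreviation sq where "sq \<equiv> sqF F"
lemma sq_def': "sq = (\<lambda>x y. (F x y)^2)" by (simp add: sqF_def)
lemma sm_sq[simp]: "sm sq" unfolding sq_def' by simp

lemma hom_sq: "hom 2 sq"
  unfolding hom_def
proof (intro allI impI)
  fix x y assume p: "(x,y) \<in> A"
  have "eul sq x y = 2 * F x y * eul F x y" using p unfolding sq_def' by (simp add: eul_def sum_2 algebra_simps)
  then show "eul sq x y = 2 * sq x y" using eulF[OF p] by (simp add: sq_def' power2_eq_square)
qed

lemma gmet_sq: "gmet F i j = (\<lambda>x y. (1/2) * dy i (dy j sq) x y)"
  by (simp add: gmet_def)

lemma sm_gmet[simp]: "sm (gmet F i j)" unfolding gmet_sq by simp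

lemma hom_gmet: "hom 0 (gmet F i j)"
proof -
  have "hom 0 (dy i (dy j sq))" using hom_dy[OF _ hom_dy[OF sm_sq hom_sq]] by simp
  then have "hom (0+0) (\<lambda>x y. (1/2) * dy i (dy j sq) x y)" by (intro hom_mult hom_const) auto
  then show ?thesis unfolding gmet_sq by simp
qed

lemma gmet_sym: "(x,y) \<in> A \<Longrightarrow> gmet F i j x y = gmet F j i x y"
  unfolding gmet_sq using dy_dy_comm[of "sq" x y i j] by simp

lemma gmet_F: "(x,y) \<in> A \<Longrightarrow> gmet F i j x y = dy i F x y * dy j F x y + F x y * dy i (dy j F) x y"
proof -
  assume p: "(x,y) \<in> A"
  have "eqA A (dy j sq) (\<lambda>x y. 2 * F x y * dy j F x y)"
    unfolding eqA_def sq_def' by simp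
  then have "dy i (dy j sq) x y = dy i (\<lambda>x y. 2 * F x y * dy j F x y) x y"
    using dy_cong p by blast
  also have "\<dots> = 2 * (dy i F x y * dy j F x y + F x y * dy i (dy j F) x y)"
    using p by (simp add: algebra_simps)
  finally show ?thesis unfolding gmet_sq by simp
qed

lemma det_gmat: "det (gmat F x y) = gmet F 1 1 x y * gmet F 2 2 x y - gmet F 1 2 x y * gmet F 2 1 x y"
  unfolding gmat_def det_2 by simp

lemma Fnz: assumes p: "(x,y) \<in> A" shows "F x y \<noteq> 0"
proof
  assume F0: "F x y = 0"
  have gy: "gmet F i 1 x y * y$1 + gmet F i 2 x y * y$2 = 0" for i
  proof -
    have "gmet F i 1 x y * y$1 + gmet F i 2 x y * y$2 = dy i F x y * eul F x y + F x y * (dy i (dy 1 F) x y * y$1 + dy i (dy 2 F) x y * y$2)"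
      using p unfolding gmet_F[OF p] eul_def sum_2 by (simp add: algebra_simps)
    then show ?thesis using eulF[OF p] F0 by simp
  qed
  have "det (gmat F x y) * y$1 = 0" "det (gmat F x y) * y$2 = 0"
    unfolding det_gmat using lin2[OF gy[of 1] gy[of 2]] by auto
  then have "y = 0" using detg[OF p] by (simp add: vec_eq_iff forall_2)
  then show False using ynz[OF p] by simp
qed


lemma ginv_props:
  assumes "(x,y) \<in> A"
  shows "(\<Sum>k\<in>UNIV. gmet F i k x y * ginv F k j x y) = (if i = j then 1 else 0)"
    "(\<Sum>k\<in>UNIV. ginv F i k x y * gmet F k j x y) = (if i = j then 1 else 0)"
  using inv2_props[OF detg[OF assms], of i j] unfolding ginv_def gmat_def by simp_all

lemma ginv_formula:
  assumes "(x,y) \<in> A"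
  shows "ginv F i j x y = ((if i = j then 1 else 0) * (gmet F 1 1 x y + gmet F 2 2 x y) - gmet F i j x y)
     / (gmet F 1 1 x y * gmet F 2 2 x y - gmet F 1 2 x y * gmet F 2 1 x y)"
  using inv2[OF detg[OF assms], of i j] unfolding ginv_def det_gmat by (simp add: gmat_def)

lemma det_nz': "(x,y) \<in> A \<Longrightarrow> gmet F 1 1 x y * gmet F 2 2 x y - gmet F 1 2 x y * gmet F 2 1 x y \<noteq> 0"
  using detg det_gmat by metis

lemma sm_ginv[simp]: "sm (ginv F i j)"
proof -
  have "sm (\<lambda>x y. ((if i = j then 1 else 0) * (gmet F 1 1 x y + gmet F 2 2 x y) - gmet F i j x y)
     / (gmet F 1 1 x y * gmet F 2 2 x y - gmet F 1 2 x y * gmet F 2 1 x y))"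
    by (rule sm_divide) (use det_nz' in auto)
  then show ?thesis by (rule sm_cong) (simp add: eqA_def ginv_formula)
qed

lemma hom0_mult: "sm f \<Longrightarrow> sm g \<Longrightarrow> hom 0 f \<Longrightarrow> hom 0 g \<Longrightarrow> hom 0 (\<lambda>x y. f x y * g x y)"
  using hom_mult[of f g 0 0] by simp

lemma hom_ginv: "hom 0 (ginv F i j)"
proof -
  let ?D = "\<lambda>x y. gmet F 1 1 x y * gmet F 2 2 x y - gmet F 1 2 x y * gmet F 2 1 x y"
  let ?N = "\<lambda>x y. (if i = j then 1 else 0) * (gmet F 1 1 x y + gmet F 2 2 x y) - gmet F i j x y"
  have smD: "sm ?D" by simp
  have hD: "hom 0 ?D" by (intro hom_diff hom0_mult hom_gmet) auto
  have hDi: "hom 0 (\<lambda>x y. inverse (?D x y))" using hom_inverse[OF smD hD] det_nz' by simp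
  have smDi: "sm (\<lambda>x y. inverse (?D x y))" using sm_inverse[OF smD] det_nz' by simp
  have hN: "hom 0 ?N" by (intro hom_diff hom0_mult hom_add hom_const hom_gmet) auto
  have "hom 0 (\<lambda>x y. ?N x y * inverse (?D x y))" by (rule hom0_mult[OF _ smDi hN hDi]) simp
  then show ?thesis
    by (rule hom_cong) (use smDi in \<open>auto simp: eqA_def ginv_formula divide_inverse\<close>)
qed

lemma sm_mup[simp]: "sm (m_up F m i)"
  unfolding m_up_def by simp

lemma my0: assumes p: "(x,y) \<in> A" shows "(\<Sum>k\<in>UNIV. m k x y * y $ k) = 0"
proof -
  have e1: "y$1 * dy 1 (dy j F) x y + y$2 * dy 2 (dy j F) x y = 0" for j
    using hom_dy[OF smF homF', of j] p unfolding hom_def eul_def sum_2 by simp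
  have e0: "y$1 * dy 1 F x y + y$2 * dy 2 F x y = F x y" using eulF[OF p] unfolding eul_def sum_2 .
  have "(\<Sum>i\<in>UNIV. \<Sum>j\<in>UNIV. gmet F i j x y * y$i * y$j) = F x y * F x y"
    unfolding gmet_F[OF p] sum_2 using alg_q1[OF e0 e1[of 1] e1[of 2]] by (simp add: algebra_simps)
  moreover have "(\<Sum>i\<in>UNIV. \<Sum>j\<in>UNIV. gmet F i j x y * y$i * y$j)
     = F x y * F x y + eps * (\<Sum>k\<in>UNIV. m k x y * y $ k)^2"
    unfolding frame[OF p] sum_2 e0[symmetric] by (simp add: algebra_simps power2_eq_square)
  ultimately show ?thesis by simp
qed

lemma Dnz: assumes p: "(x,y) \<in> A" shows "dy 1 F x y * m 2 x y - dy 2 F x y * m 1 x y \<noteq> 0"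
proof -
  have "det (gmat F x y) = eps * (dy 1 F x y * m 2 x y - dy 2 F x y * m 1 x y)^2"
    unfolding det_gmat frame[OF p] by (simp add: algebra_simps power2_eq_square)
  then show ?thesis using detg[OF p] by auto
qed

lemma g_mup: assumes p: "(x,y) \<in> A" shows "(\<Sum>k\<in>UNIV. gmet F i k x y * m_up F m k x y) = m i x y"
proof -
  have "(\<Sum>k\<in>UNIV. gmet F i k x y * m_up F m k x y) = (\<Sum>j\<in>UNIV. (\<Sum>k\<in>UNIV. gmet F i k x y * ginv F k j x y) * m j x y)"
    unfolding m_up_def by (simp add: sum_2 algebra_simps)
  also have "\<dots> = m i x y" unfolding ginv_props[OF p] using exhaust_2[of i] by (auto simp: sum_2)
  finally show ?thesis .
qed

lemma m_mup: assumes p: "(x,y) \<in> A"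
  shows "(\<Sum>k\<in>UNIV. m k x y * m_up F m k x y) = eps" "(\<Sum>k\<in>UNIV. dy k F x y * m_up F m k x y) = 0"
proof -
  define a where "a = (\<Sum>k\<in>UNIV. dy k F x y * m_up F m k x y)"
  define b where "b = (\<Sum>k\<in>UNIV. m k x y * m_up F m k x y)"
  have e: "dy i F x y * a + eps * m i x y * b = m i x y" for i
  proof -
    have "m i x y = (\<Sum>k\<in>UNIV. gmet F i k x y * m_up F m k x y)" using g_mup[OF p] by simp
    also have "\<dots> = dy i F x y * a + eps * m i x y * b"
      unfolding frame[OF p] a_def b_def sum_2 by (simp add: algebra_simps)
    finally show ?thesis by simp
  qed
  have "(dy 1 F x y * m 2 x y - dy 2 F x y * m 1 x y) * a = 0"
    using alg_aD[OF e[of 1] e[of 2]] .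
  then have a0: "a = 0" using Dnz[OF p] by simp
  have "m 1 x y \<noteq> 0 \<or> m 2 x y \<noteq> 0" using Dnz[OF p] by auto
  then have "eps * b = 1" using e[of 1] e[of 2] a0 by (auto simp: algebra_simps)
  then have "b = eps" using epsv by auto
  then show "(\<Sum>k\<in>UNIV. m k x y * m_up F m k x y) = eps" "(\<Sum>k\<in>UNIV. dy k F x y * m_up F m k x y) = 0"
    using a0 unfolding a_def b_def by auto
qed

lemma decomp: assumes p: "(x,y) \<in> A" and w: "(\<Sum>k\<in>UNIV. w k * y $ k) = 0"
  shows "w k = eps * (\<Sum>j\<in>UNIV. w j * m_up F m j x y) * m k x y"
proof -
  have "(w 1 * m 2 x y - w 2 * m 1 x y) * y$1 = 0 \<and> (w 1 * m 2 x y - w 2 * m 1 x y) * y$2 = 0"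
    using lin2[of "w 1" "y$1" "w 2" "y$2" "m 1 x y" "m 2 x y"] w my0[OF p] by (simp add: sum_2)
  then have c: "w 1 * m 2 x y = w 2 * m 1 x y" using ynz[OF p] by (auto simp: vec_eq_iff forall_2)
  have "w k * (\<Sum>j\<in>UNIV. m j x y * m_up F m j x y) = m k x y * (\<Sum>j\<in>UNIV. w j * m_up F m j x y)"
    using exhaust_2[of k] c by (auto simp: sum_2 algebra_simps)
  then have "w k * eps = m k x y * (\<Sum>j\<in>UNIV. w j * m_up F m j x y)" using m_mup[OF p] by simp
  then have "w k * eps * eps = eps * (\<Sum>j\<in>UNIV. w j * m_up F m j x y) * m k x y" by (simp add: algebra_simps)
  then show ?thesis by (simp add: mult.assoc)
qed

end

context opn
begin
lemma hom_mult': "sm f \<Longrightarrow> sm g \<Longrightarrow> hom r f \<Longrightarrow> hom s g \<Longrightarrow> t = r + s \<Longrightarrow> hom t (\<lambda>x y. f x y * g x y)"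
  using hom_mult by simp
lemma hom_cmult: "sm g \<Longrightarrow> hom r g \<Longrightarrow> hom r (\<lambda>x y. c * g x y)"
  using hom_mult'[OF sm_const _ hom_const, of g r r c] by simp
lemma hom_dy': "sm h \<Longrightarrow> hom r h \<Longrightarrow> s = r - 1 \<Longrightarrow> hom s (dy j h)"
  using hom_dy by simp
lemma homD: "hom r h \<Longrightarrow> (x,y) \<in> A \<Longrightarrow> (\<Sum>k\<in>UNIV. y $ k * dy k h x y) = r * h x y"
  unfolding hom_def eul_def by blast
end

context fins
begin

lemma hom_ell: "hom 0 (dy i F)"
  using hom_dy'[OF smF homF'] by simp

lemma hom_m: "hom 0 (m i)"
proof -
  have hmm: "hom 0 (\<lambda>x y. m i x y * m j x y)" for i j
  proof -
    have "hom 0 (\<lambda>x y. eps * (gmet F i j x y - dy i F x y * dy j F x y))"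
      by (intro hom_cmult hom_diff hom0_mult hom_gmet hom_ell) auto
    then show ?thesis
      by (rule hom_cong) (auto simp: eqA_def frame algebra_simps)
  qed
  have e: "eul (m i) x y * m j x y + m i x y * eul (m j) x y = 0" if p: "(x,y) \<in> A" for i j x y
    using hmm[of i j] p eul_mult[of "m i" "m j" x y] unfolding hom_def by simp
  show ?thesis unfolding hom_def
  proof (intro allI impI)
    fix x y assume p: "(x,y) \<in> A"
    have z: "m k x y \<noteq> 0 \<Longrightarrow> eul (m k) x y = 0" for k
      using e[OF p, of k k] by auto
    have "m 1 x y \<noteq> 0 \<or> m 2 x y \<noteq> 0" using Dnz[OF p] by auto
    then obtain k where k: "m k x y \<noteq> 0" by blast
    have "eul (m i) x y * m k x y = 0" using e[OF p, of i k] z[OF k] by simp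
    then show "eul (m i) x y = 0 * m i x y" using k by simp
  qed
qed

lemma hom_mup: "hom 0 (m_up F m i)"
  unfolding m_up_def by (intro hom_sum2 hom0_mult hom_ginv hom_m) auto

definition Kf :: "2 \<Rightarrow> fn" where
  "Kf k = (\<lambda>x y. (\<Sum>j\<in>UNIV. y $ j * dy k (dx j sq) x y) - dx k sq x y)"

lemma sm_Kf[simp]: "sm (Kf k)" unfolding Kf_def by simp

lemma Gspray_K: "Gspray F i = (\<lambda>x y. (1/4) * (\<Sum>k\<in>UNIV. ginv F i k x y * Kf k x y))"
  unfolding Gspray_def Kf_def by simp

lemma sm_G[simp]: "sm (Gspray F i)" unfolding Gspray_K by simp
lemma sm_N[simp]: "sm (Gconn F j i)" unfolding Gconn_def by simp

lemma hom_Kf: "hom 2 (Kf k)"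
proof -
  have a: "hom 2 (dx j sq)" for j using hom_dx[OF sm_sq hom_sq] .
  have b: "hom 1 (dy k (dx j sq))" for j using hom_dy'[OF _ a] by simp
  have "hom 2 (\<lambda>x y. y $ j * dy k (dx j sq) x y)" for j
    by (rule hom_mult'[OF _ _ hom_ycoord b]) auto
  then show ?thesis unfolding Kf_def by (intro hom_diff hom_sum2 a) auto
qed

lemma hom_G: "hom 2 (Gspray F i)"
  unfolding Gspray_K
  by (intro hom_cmult hom_sum2 hom_mult'[OF _ _ hom_ginv hom_Kf]) auto

lemma hom_N: "hom 1 (Gconn F j i)"
  unfolding Gconn_def using hom_dy'[OF sm_G hom_G] by simp

lemma gG: assumes p: "(x,y) \<in> A"
  shows "(\<Sum>i\<in>UNIV. gmet F l i x y * Gspray F i x y) = (1/4) * Kf l x y"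
proof -
  have "(\<Sum>i\<in>UNIV. gmet F l i x y * Gspray F i x y)
     = (1/4) * ((\<Sum>i\<in>UNIV. gmet F l i x y * ginv F i 1 x y) * Kf 1 x y + (\<Sum>i\<in>UNIV. gmet F l i x y * ginv F i 2 x y) * Kf 2 x y)"
    unfolding Gspray_K by (simp add: sum_2 algebra_simps)
  also have "\<dots> = (1/4) * Kf l x y" unfolding ginv_props(1)[OF p] using exhaust_2[of l] by auto
  finally show ?thesis .
qed

lemma dysq: assumes p: "(x,y) \<in> A"
  shows "dy j sq x y = 2 * (\<Sum>l\<in>UNIV. gmet F j l x y * y $ l)"
proof -
  have "(\<Sum>l\<in>UNIV. y $ l * dy l (dy j sq) x y) = 1 * dy j sq x y"
    using homD[OF hom_dy'[OF sm_sq hom_sq] p, of 1 j] by simp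
  moreover have "dy l (dy j sq) x y = 2 * gmet F j l x y" for l
    unfolding gmet_sq using dy_dy_comm[OF sm_sq p] by simp
  ultimately show ?thesis by (simp add: sum_2 algebra_simps)
qed

lemma T1: assumes p: "(x,y) \<in> A"
  shows "(\<Sum>j\<in>UNIV. Gspray F j x y * dy j sq x y) = (1/2) * (\<Sum>j\<in>UNIV. y $ j * dx j sq x y)"
proof -
  have "(\<Sum>j\<in>UNIV. Gspray F j x y * dy j sq x y)
      = 2 * (\<Sum>l\<in>UNIV. y $ l * (\<Sum>j\<in>UNIV. gmet F l j x y * Gspray F j x y))"
    unfolding dysq[OF p] using gmet_sym[OF p, of 1 2] by (simp add: sum_2 algebra_simps)
  also have "\<dots> = (1/2) * (\<Sum>l\<in>UNIV. y $ l * Kf l x y)"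
    unfolding gG[OF p] by (simp add: sum_2 algebra_simps)
  also have "(\<Sum>l\<in>UNIV. y $ l * Kf l x y) = (\<Sum>j\<in>UNIV. y $ j * dx j sq x y)"
  proof -
    have h: "(\<Sum>l\<in>UNIV. y $ l * dy l (dx j sq) x y) = 2 * dx j sq x y" for j
      using homD[OF hom_dx[OF sm_sq hom_sq] p] .
    have "(\<Sum>l\<in>UNIV. y $ l * Kf l x y) = y $ 1 * (\<Sum>l\<in>UNIV. y $ l * dy l (dx 1 sq) x y)
       + y $ 2 * (\<Sum>l\<in>UNIV. y $ l * dy l (dx 2 sq) x y) - (\<Sum>j\<in>UNIV. y $ j * dx j sq x y)"
      unfolding Kf_def by (simp add: sum_2 algebra_simps)
    then show ?thesis unfolding h by (simp add: sum_2 algebra_simps)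
  qed
  finally show ?thesis .
qed

lemma delta_sq: assumes p: "(x,y) \<in> A" shows "hdelta F i sq x y = 0"
proof -
  have "eqA A (\<lambda>x y. \<Sum>j\<in>UNIV. Gspray F j x y * dy j sq x y) (\<lambda>x y. (1/2) * (\<Sum>j\<in>UNIV. y $ j * dx j sq x y))"
    unfolding eqA_def using T1 by blast
  from dy_cong[OF this p, of i]
  have "(\<Sum>j\<in>UNIV. Gconn F j i x y * dy j sq x y + Gspray F j x y * dy i (dy j sq) x y)
      = (1/2) * (dx i sq x y + (\<Sum>j\<in>UNIV. y $ j * dy i (dx j sq) x y))"
    using p exhaust_2[of i] by (auto simp: Gconn_def sum_2 algebra_simps)
  moreover have "(\<Sum>j\<in>UNIV. Gspray F j x y * dy i (dy j sq) x y) = (1/2) * Kf i x y"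
  proof -
    have "(\<Sum>j\<in>UNIV. Gspray F j x y * dy i (dy j sq) x y) = 2 * (\<Sum>j\<in>UNIV. gmet F i j x y * Gspray F j x y)"
      unfolding gmet_sq by (simp add: sum_2 algebra_simps)
    then show ?thesis unfolding gG[OF p] by simp
  qed
  ultimately have "(\<Sum>j\<in>UNIV. Gconn F j i x y * dy j sq x y) = dx i sq x y"
    unfolding Kf_def by (simp add: sum.distrib algebra_simps)
  then show ?thesis unfolding hdelta_def by simp
qed

lemma hdelta_mult: "sm f \<Longrightarrow> sm g \<Longrightarrow> (x,y) \<in> A \<Longrightarrow>
   hdelta F i (\<lambda>x y. f x y * g x y) x y = hdelta F i f x y * g x y + f x y * hdelta F i g x y"
  unfolding hdelta_def by (simp add: sum_2 algebra_simps)

lemma delta_F: assumes p: "(x,y) \<in> A" shows "hdelta F i F x y = 0"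
proof -
  have "hdelta F i sq x y = hdelta F i (\<lambda>x y. F x y * F x y) x y"
    unfolding sq_def' hdelta_def by (simp add: power2_eq_square)
  also have "\<dots> = 2 * F x y * hdelta F i F x y" using p by (simp add: hdelta_mult)
  finally show ?thesis using delta_sq[OF p] Fnz[OF p] by simp
qed

end

context fins
begin

lemma sm_hdelta[simp]: "sm h \<Longrightarrow> sm (hdelta F i h)"
  unfolding hdelta_def by simp

lemma hdelta_cong: "eqA A f g \<Longrightarrow> (x,y) \<in> A \<Longrightarrow> hdelta F i f x y = hdelta F i g x y"
  unfolding hdelta_def using dx_cong dy_cong by simp

lemma hdelta_add: "sm f \<Longrightarrow> sm g \<Longrightarrow> (x,y) \<in> A \<Longrightarrow>
   hdelta F i (\<lambda>x y. f x y + g x y) x y = hdelta F i f x y + hdelta F i g x y"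
  unfolding hdelta_def by (simp add: sum_2 algebra_simps)
lemma hdelta_diff: "sm f \<Longrightarrow> sm g \<Longrightarrow> (x,y) \<in> A \<Longrightarrow>
   hdelta F i (\<lambda>x y. f x y - g x y) x y = hdelta F i f x y - hdelta F i g x y"
  unfolding hdelta_def by (simp add: sum_2 algebra_simps)
lemma hdelta_const: "hdelta F i (\<lambda>x y. c) x y = 0"
  unfolding hdelta_def by simp
lemma hdelta_sum2: "(\<And>k. sm (h k)) \<Longrightarrow> (x,y) \<in> A \<Longrightarrow>
   hdelta F i (\<lambda>x y. \<Sum>k\<in>(UNIV::2 set). h k x y) x y = (\<Sum>k\<in>UNIV. hdelta F i (h k) x y)"
  unfolding hdelta_def by (simp add: sum_2 algebra_simps)
lemma hdelta_cmult: "sm f \<Longrightarrow> (x,y) \<in> A \<Longrightarrow> hdelta F i (\<lambda>x y. c * f x y) x y = c * hdelta F i f x y"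
  using hdelta_mult[OF sm_const, of f x y i c] by (simp add: hdelta_const)

lemma comm: assumes "sm h" "(x,y) \<in> A"
  shows "dy k (hdelta F i h) x y = hdelta F i (dy k h) x y - (\<Sum>j\<in>UNIV. dy k (Gconn F j i) x y * dy j h x y)"
  using assms unfolding hdelta_def
  by (simp add: sum_2 algebra_simps dx_dy_comm[OF assms] dy_dy_comm[OF assms, of k])

lemma P3a: "sm h \<Longrightarrow> (x,y) \<in> A \<Longrightarrow> dy a (dy b (dy c h)) x y = dy b (dy a (dy c h)) x y"
  by (rule dy_dy_comm) auto
lemma P3b: "sm h \<Longrightarrow> (x,y) \<in> A \<Longrightarrow> dy a (dy b (dy c h)) x y = dy a (dy c (dy b h)) x y"
  by (rule dy_cong[OF eqA_dy_dy])
lemma P4a: "sm h \<Longrightarrow> (x,y) \<in> A \<Longrightarrow> dy a (dy b (dy c (dy d h))) x y = dy b (dy a (dy c (dy d h))) x y"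
  by (rule dy_dy_comm) auto
lemma P4b: "sm h \<Longrightarrow> (x,y) \<in> A \<Longrightarrow> dy a (dy b (dy c (dy d h))) x y = dy a (dy c (dy b (dy d h))) x y"
  by (rule dy_cong[OF eqA_dy_dy]) auto
lemma P4c: assumes h: "sm h" and p: "(x,y) \<in> A"
  shows "dy a (dy b (dy c (dy d h))) x y = dy a (dy b (dy d (dy c h))) x y"
proof -
  have "eqA A (pd (dvy b) (dy c (dy d h))) (pd (dvy b) (dy d (dy c h)))"
    by (rule eqA_pd) (rule eqA_dy_dy[OF h])
  then have "eqA A (dy b (dy c (dy d h))) (dy b (dy d (dy c h)))" by (simp add: dy_pd)
  then show ?thesis by (rule dy_cong[OF _ p])
qed

abbreviation G where "G \<equiv> Gspray F"
abbreviation N where "N \<equiv> Gconn F"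

lemma N_sym: "(x,y) \<in> A \<Longrightarrow> dy j (N p i) x y = dy i (N p j) x y"
  unfolding Gconn_def by (rule dy_dy_comm) simp

lemma NN_sym1: "(x,y) \<in> A \<Longrightarrow> dy k (dy j (N p i)) x y = dy j (dy k (N p i)) x y"
  unfolding Gconn_def by (rule P3a) simp
lemma NN_sym2: "(x,y) \<in> A \<Longrightarrow> dy k (dy j (N p i)) x y = dy k (dy i (N p j)) x y"
  unfolding Gconn_def by (rule P3b) simp

lemma eulN1: assumes p: "(x,y) \<in> A" shows "(\<Sum>i\<in>UNIV. y $ i * dy j (N q i) x y) = N q j x y"
proof -
  have "(\<Sum>i\<in>UNIV. y $ i * dy j (N q i) x y) = (\<Sum>i\<in>UNIV. y $ i * dy i (dy j (G q)) x y)"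
    unfolding Gconn_def using dy_dy_comm[OF sm_G p] by simp
  also have "\<dots> = 1 * dy j (G q) x y"
    using homD[OF hom_dy'[OF sm_G hom_G] p] by simp
  finally show ?thesis unfolding Gconn_def by simp
qed

lemma eulN2: assumes p: "(x,y) \<in> A" shows "(\<Sum>i\<in>UNIV. y $ i * dy k (dy j (N q i)) x y) = 0"
proof -
  have "dy k (dy j (N q i)) x y = dy i (dy k (dy j (G q))) x y" for i
    unfolding Gconn_def using P3b[OF sm_G p, of k j i] P3a[OF sm_G p, of k i j] P3b[OF sm_G p, of i k j] P3a[OF sm_G p]
    by metis
  then have "(\<Sum>i\<in>UNIV. y $ i * dy k (dy j (N q i)) x y) = (\<Sum>i\<in>UNIV. y $ i * dy i (dy k (dy j (G q))) x y)"
    by simp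
  also have "\<dots> = 0 * dy k (dy j (G q)) x y"
    using homD[OF hom_dy'[OF _ hom_dy'[OF sm_G hom_G]] p] by simp
  finally show ?thesis by simp
qed

lemma perm4: assumes p: "(x,y) \<in> A" and h: "sm h"
  shows "dy l (dy k (dy j (dy i h))) x y = dy i (dy l (dy k (dy j h))) x y"
proof -
  have "dy l (dy k (dy j (dy i h))) x y = dy l (dy k (dy i (dy j h))) x y" using P4c[OF h p] .
  also have "\<dots> = dy l (dy i (dy k (dy j h))) x y" using P4b[OF h p] .
  also have "\<dots> = dy i (dy l (dy k (dy j h))) x y" using P4a[OF h p] .
  finally show ?thesis .
qed

lemma eulN3: assumes p: "(x,y) \<in> A"
  shows "(\<Sum>i\<in>UNIV. y $ i * dy l (dy k (dy j (N q i))) x y) = - dy k (dy j (N q l)) x y"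
proof -
  have "dy l (dy k (dy j (N q i))) x y = dy i (dy l (dy k (dy j (G q)))) x y" for i
    unfolding Gconn_def using perm4[OF p sm_G] .
  then have "(\<Sum>i\<in>UNIV. y $ i * dy l (dy k (dy j (N q i))) x y) = (\<Sum>i\<in>UNIV. y $ i * dy i (dy l (dy k (dy j (G q)))) x y)"
    by simp
  also have "\<dots> = (-1) * dy l (dy k (dy j (G q))) x y"
    using homD[OF hom_dy'[OF _ hom_dy'[OF _ hom_dy'[OF sm_G hom_G]]] p] by simp
  also have "dy l (dy k (dy j (G q))) x y = dy k (dy j (N q l)) x y"
    unfolding Gconn_def using P3a[OF sm_G p, of l k j] P3b[OF sm_G p, of k l j] by simp
  finally show ?thesis by simp
qed

end

context fins
begin

lemma stepD: assumes p: "(x,y) \<in> A"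
  shows "hdelta F i (gmet F j k) x y = (\<Sum>q\<in>UNIV. dy k (N q i) x y * gmet F q j x y
      + dy j (N q i) x y * gmet F q k x y + dy k (dy j (N q i)) x y * ((1/2) * dy q sq x y))"
proof -
  let ?W = "\<lambda>x y. hdelta F i (dy j sq) x y - (\<Sum>q\<in>UNIV. dy j (N q i) x y * dy q sq x y)"
  have W0: "?W x y = 0" if "(x,y) \<in> A" for x y
  proof -
    have "dy j (hdelta F i sq) x y = 0" by (rule dy_zero[OF delta_sq that])
    then show ?thesis using comm[OF sm_sq that, of j i] by simp
  qed
  have "dy k ?W x y = 0" by (rule dy_zero[OF W0 p])
  then have e1: "dy k (hdelta F i (dy j sq)) x y = (\<Sum>q\<in>UNIV. dy k (dy j (N q i)) x y * dy q sq x y + dy j (N q i) x y * dy k (dy q sq) x y)"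
    using p by (simp add: sum_2)
  have e2: "dy k (hdelta F i (dy j sq)) x y = hdelta F i (dy k (dy j sq)) x y - (\<Sum>q\<in>UNIV. dy k (N q i) x y * dy q (dy j sq) x y)"
    by (rule comm) (use p in auto)
  have e3: "hdelta F i (gmet F j k) x y = (1/2) * hdelta F i (dy k (dy j sq)) x y"
  proof -
    have "hdelta F i (gmet F j k) x y = (1/2) * hdelta F i (dy j (dy k sq)) x y"
      unfolding gmet_sq using hdelta_cmult[of "dy j (dy k sq)" x y i "1/2"] p by simp
    also have "hdelta F i (dy j (dy k sq)) x y = hdelta F i (dy k (dy j sq)) x y"
      by (rule hdelta_cong[OF eqA_dy_dy[OF sm_sq] p])
    finally show ?thesis .
  qed
  have g1: "dy q (dy j sq) x y = 2 * gmet F q j x y" for q unfolding gmet_sq by simp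
  have g2: "dy k (dy q sq) x y = 2 * gmet F q k x y" for q unfolding gmet_sq using gmet_sym[OF p, of k q] gmet_sq by simp
  show ?thesis using e1 e2 e3 unfolding g1 g2 by (simp add: sum_2 algebra_simps)
qed

abbreviation mu where "mu \<equiv> m_up F m"

definition Qf :: "2 \<Rightarrow> fn" where
  "Qf i = (\<lambda>x y. \<Sum>l\<in>UNIV. m l x y * (hdelta F i (mu l) x y + (\<Sum>q\<in>UNIV. dy q (N l i) x y * mu q x y)))"

definition Lm :: "2 \<Rightarrow> fn" where
  "Lm i = (\<lambda>x y. \<Sum>k\<in>UNIV. \<Sum>l\<in>UNIV. mu k x y * mu l x y * (\<Sum>q\<in>UNIV. dy k (dy l (N q i)) x y * ((1/2) * dy q sq x y)))"

lemma Q_eq: assumes p: "(x,y) \<in> A" shows "Qf i x y = - (1/2) * Lm i x y"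
proof -
  let ?S = "\<lambda>x y. \<Sum>k\<in>UNIV. \<Sum>l\<in>UNIV. gmet F k l x y * mu k x y * mu l x y"
  have S: "?S x y = eps" if "(x,y) \<in> A" for x y
  proof -
    have "?S x y = (\<Sum>k\<in>UNIV. mu k x y * (\<Sum>l\<in>UNIV. gmet F k l x y * mu l x y))"
      by (simp add: sum_2 algebra_simps)
    also have "\<dots> = eps" unfolding g_mup[OF that] using m_mup(1)[OF that] by (simp add: mult.commute)
    finally show ?thesis .
  qed
  have "hdelta F i ?S x y = hdelta F i (\<lambda>x y. eps) x y"
    by (rule hdelta_cong[OF _ p]) (simp add: eqA_def S)
  then have z: "hdelta F i ?S x y = 0" by (simp add: hdelta_const)
  have "hdelta F i ?S x y = (\<Sum>k\<in>UNIV. \<Sum>l\<in>UNIV. hdelta F i (gmet F k l) x y * mu k x y * mu l x y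
      + gmet F k l x y * hdelta F i (mu k) x y * mu l x y + gmet F k l x y * mu k x y * hdelta F i (mu l) x y)"
    using p by (simp add: hdelta_sum2 hdelta_mult, simp add: sum_2 algebra_simps)
  also have "\<dots> = (\<Sum>k\<in>UNIV. \<Sum>l\<in>UNIV. hdelta F i (gmet F k l) x y * mu k x y * mu l x y)
      + 2 * (\<Sum>l\<in>UNIV. m l x y * hdelta F i (mu l) x y)"
    unfolding g_mup[OF p, symmetric] using gmet_sym[OF p, of 1 2] by (simp add: sum_2 algebra_simps)
  also have "(\<Sum>k\<in>UNIV. \<Sum>l\<in>UNIV. hdelta F i (gmet F k l) x y * mu k x y * mu l x y)
     = 2 * (\<Sum>l\<in>UNIV. m l x y * (\<Sum>q\<in>UNIV. dy q (N l i) x y * mu q x y)) + Lm i x y"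
    unfolding stepD[OF p] Lm_def g_mup[OF p, symmetric]
    using gmet_sym[OF p, of 1 2] NN_sym1[OF p, of 2 1]
    by (simp add: sum_2 algebra_simps)
  finally have "0 = 2 * Qf i x y + Lm i x y" using z unfolding Qf_def by (simp add: sum_2 algebra_simps)
  then show ?thesis by simp
qed

end

context fins
begin

lemma Lm_y: assumes p: "(x,y) \<in> A" shows "(\<Sum>i\<in>UNIV. y $ i * Lm i x y) = 0"
proof -
  have "(\<Sum>i\<in>UNIV. y $ i * Lm i x y) = (\<Sum>k\<in>UNIV. \<Sum>l\<in>UNIV. mu k x y * mu l x y *
     (\<Sum>q\<in>UNIV. (\<Sum>i\<in>UNIV. y $ i * dy k (dy l (N q i)) x y) * ((1/2) * dy q sq x y)))"
    unfolding Lm_def by (simp add: sum_2 algebra_simps)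
  also have "\<dots> = 0" by (simp add: eulN2[OF p])
  finally show ?thesis .
qed

lemma Q_y: assumes p: "(x,y) \<in> A" shows "(\<Sum>i\<in>UNIV. y $ i * Qf i x y) = 0"
  using Lm_y[OF p] Q_eq[OF p] by (simp add: sum_2 algebra_simps)

lemma T_def: "(x,y) \<in> A \<Longrightarrow> dy l (gmet F j k) x y = (1/2) * dy l (dy j (dy k sq)) x y"
  unfolding gmet_sq by simp

lemma T_sym1: "(x,y) \<in> A \<Longrightarrow> dy l (gmet F j k) x y = dy j (gmet F l k) x y"
  unfolding T_def using P3a[OF sm_sq] by metis
lemma T_sym2: "(x,y) \<in> A \<Longrightarrow> dy l (gmet F j k) x y = dy l (gmet F k j) x y"
  unfolding T_def using P3b[OF sm_sq] by metis

lemma cartan_T: "(x,y) \<in> A \<Longrightarrow> cartan F l j k x y = (1/2) * dy l (gmet F j k) x y"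
  unfolding T_def cartan_def sqF_def by simp

end

locale lands = fins +
  fixes I :: fn
  assumes mainsc: "\<And>x y i j k. (x,y) \<in> A \<Longrightarrow> F x y * cartan F i j k x y = I x y * m i x y * m j x y * m k x y"
    and landsb: "\<And>x y. (x,y) \<in> A \<Longrightarrow> hd1 F I x y = 0"
begin

lemma c_q: assumes p: "(x,y) \<in> A"
  shows "F x y * (\<Sum>j\<in>UNIV. \<Sum>l\<in>UNIV. dy q (gmet F j l) x y * mu j x y * mu l x y) = 2 * I x y * m q x y"
proof -
  have "F x y * dy q (gmet F j l) x y = 2 * I x y * m q x y * m j x y * m l x y" for j l
    using mainsc[OF p, of q j l] cartan_T[OF p] by simp
  note h = this
  have "F x y * (\<Sum>j\<in>UNIV. \<Sum>l\<in>UNIV. dy q (gmet F j l) x y * mu j x y * mu l x y)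
     = (\<Sum>j\<in>UNIV. \<Sum>l\<in>UNIV. (F x y * dy q (gmet F j l) x y) * mu j x y * mu l x y)"
    by (simp add: sum_2 algebra_simps)
  also have "\<dots> = (\<Sum>j\<in>UNIV. \<Sum>l\<in>UNIV. (2 * I x y * m q x y * m j x y * m l x y) * mu j x y * mu l x y)"
    by (simp only: h)
  also have "\<dots> = 2 * I x y * m q x y * (\<Sum>j\<in>UNIV. m j x y * mu j x y) * (\<Sum>l\<in>UNIV. m l x y * mu l x y)"
    by (simp add: sum_2 algebra_simps)
  finally have "F x y * (\<Sum>j\<in>UNIV. \<Sum>l\<in>UNIV. dy q (gmet F j l) x y * mu j x y * mu l x y)
     = 2 * I x y * m q x y * (\<Sum>j\<in>UNIV. m j x y * mu j x y) * (\<Sum>l\<in>UNIV. m l x y * mu l x y)" .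
  then show ?thesis using m_mup(1)[OF p] by simp
qed

definition Psi :: fn where
  "Psi = (\<lambda>x y. \<Sum>j\<in>UNIV. \<Sum>k\<in>UNIV. \<Sum>l\<in>UNIV. dy l (gmet F j k) x y * mu j x y * mu k x y * mu l x y)"

lemma sm_Psi[simp]: "sm Psi" unfolding Psi_def by simp

lemma FPsi: assumes p: "(x,y) \<in> A" shows "F x y * Psi x y = 2 * eps * I x y"
proof -
  have "F x y * Psi x y = (\<Sum>l\<in>UNIV. mu l x y * (F x y * (\<Sum>j\<in>UNIV. \<Sum>k\<in>UNIV. dy l (gmet F j k) x y * mu j x y * mu k x y)))"
    unfolding Psi_def by (simp add: sum_2 algebra_simps)
  also have "\<dots> = 2 * I x y * (\<Sum>l\<in>UNIV. m l x y * mu l x y)" unfolding c_q[OF p] by (simp add: sum_2 algebra_simps)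
  finally show ?thesis using m_mup(1)[OF p] by simp
qed

lemma yPsi: assumes p: "(x,y) \<in> A" shows "(\<Sum>i\<in>UNIV. y $ i * hdelta F i Psi x y) = 0"
proof -
  have I_eq: "eqA A I (\<lambda>x y. (eps / 2) * (F x y * Psi x y))"
    unfolding eqA_def using FPsi by (simp add: mult.assoc[symmetric])
  have "hdelta F i I x y = (eps / 2) * (F x y * hdelta F i Psi x y)" for i
  proof -
    have "hdelta F i I x y = hdelta F i (\<lambda>x y. (eps / 2) * (F x y * Psi x y)) x y"
      by (rule hdelta_cong[OF I_eq p])
    also have "\<dots> = (eps / 2) * hdelta F i (\<lambda>x y. F x y * Psi x y) x y"
      by (rule hdelta_cmult) (simp_all add: p)
    also have "\<dots> = (eps / 2) * (F x y * hdelta F i Psi x y)"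
      using p by (simp add: hdelta_mult delta_F)
    finally show ?thesis .
  qed
  note hI = this
  have "0 = (\<Sum>i\<in>UNIV. ell_up F i x y * hdelta F i I x y)"
    using landsb[OF p] unfolding hd1_def by simp
  also have "\<dots> = (\<Sum>i\<in>UNIV. (y $ i / F x y) * ((eps / 2) * (F x y * hdelta F i Psi x y)))"
    unfolding ell_up_def hI ..
  also have "\<dots> = (eps / 2) * (\<Sum>i\<in>UNIV. y $ i * hdelta F i Psi x y)"
    using Fnz[OF p] by (simp add: sum_2 field_simps)
  finally show ?thesis by simp
qed

end

context fins
begin

lemma R_i: assumes p: "(x,y) \<in> A"
  shows "hdelta F i (dy l (gmet F j k)) x y = (\<Sum>q\<in>UNIV.
      dy l (dy k (N q i)) x y * gmet F q j x y + dy k (N q i) x y * dy l (gmet F q j) x y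
    + dy l (dy j (N q i)) x y * gmet F q k x y + dy j (N q i) x y * dy l (gmet F q k) x y
    + dy l (dy k (dy j (N q i))) x y * ((1/2) * dy q sq x y)
    + dy k (dy j (N q i)) x y * ((1/2) * dy l (dy q sq) x y)
    + dy l (N q i) x y * dy q (gmet F j k) x y)"
proof -
  have c: "hdelta F i (dy l (gmet F j k)) x y = dy l (hdelta F i (gmet F j k)) x y + (\<Sum>q\<in>UNIV. dy l (N q i) x y * dy q (gmet F j k) x y)"
    using comm[OF sm_gmet p, of l i j k] by simp
  have e: "eqA A (hdelta F i (gmet F j k)) (\<lambda>x y. \<Sum>q\<in>UNIV. dy k (N q i) x y * gmet F q j x y
      + dy j (N q i) x y * gmet F q k x y + dy k (dy j (N q i)) x y * ((1/2) * dy q sq x y))"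
    unfolding eqA_def using stepD by blast
  have "dy l (hdelta F i (gmet F j k)) x y = dy l (\<lambda>x y. \<Sum>q\<in>UNIV. dy k (N q i) x y * gmet F q j x y
      + dy j (N q i) x y * gmet F q k x y + dy k (dy j (N q i)) x y * ((1/2) * dy q sq x y)) x y"
    by (rule dy_cong[OF e p])
  also have "\<dots> = (\<Sum>q\<in>UNIV.
      dy l (dy k (N q i)) x y * gmet F q j x y + dy k (N q i) x y * dy l (gmet F q j) x y
    + dy l (dy j (N q i)) x y * gmet F q k x y + dy j (N q i) x y * dy l (gmet F q k) x y
    + dy l (dy k (dy j (N q i))) x y * ((1/2) * dy q sq x y)
    + dy k (dy j (N q i)) x y * ((1/2) * dy l (dy q sq) x y))"
    using p by (simp, simp add: sum_2 algebra_simps add_divide_distrib)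
  finally show ?thesis using c by (simp add: sum_2 algebra_simps)
qed

lemma R_y: assumes p: "(x,y) \<in> A"
  shows "(\<Sum>i\<in>UNIV. y $ i * hdelta F i (dy l (gmet F j k)) x y) =
     (\<Sum>q\<in>UNIV. N q k x y * dy l (gmet F q j) x y + N q j x y * dy l (gmet F q k) x y + N q l x y * dy q (gmet F j k) x y)
     - (\<Sum>q\<in>UNIV. dy k (dy j (N q l)) x y * ((1/2) * dy q sq x y))"
proof -
  have "(\<Sum>i\<in>UNIV. y $ i * hdelta F i (dy l (gmet F j k)) x y) = (\<Sum>q\<in>UNIV.
      (\<Sum>i\<in>UNIV. y $ i * dy l (dy k (N q i)) x y) * gmet F q j x y + (\<Sum>i\<in>UNIV. y $ i * dy k (N q i) x y) * dy l (gmet F q j) x y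
    + (\<Sum>i\<in>UNIV. y $ i * dy l (dy j (N q i)) x y) * gmet F q k x y + (\<Sum>i\<in>UNIV. y $ i * dy j (N q i) x y) * dy l (gmet F q k) x y
    + (\<Sum>i\<in>UNIV. y $ i * dy l (dy k (dy j (N q i))) x y) * ((1/2) * dy q sq x y)
    + (\<Sum>i\<in>UNIV. y $ i * dy k (dy j (N q i)) x y) * ((1/2) * dy l (dy q sq) x y)
    + (\<Sum>i\<in>UNIV. y $ i * dy l (N q i) x y) * dy q (gmet F j k) x y)"
    unfolding R_i[OF p] by (simp add: sum_2 algebra_simps)
  also have "\<dots> = (\<Sum>q\<in>UNIV. N q k x y * dy l (gmet F q j) x y + N q j x y * dy l (gmet F q k) x y
      - dy k (dy j (N q l)) x y * ((1/2) * dy q sq x y) + N q l x y * dy q (gmet F j k) x y)"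
    by (simp only: eulN1[OF p] eulN2[OF p] eulN3[OF p]) simp
  finally show ?thesis by (simp add: sum_2 algebra_simps)
qed

end

context lands
begin

definition Dq :: "2 \<Rightarrow> fn" where
  "Dq q = (\<lambda>x y. \<Sum>i\<in>UNIV. y $ i * hdelta F i (mu q) x y)"

definition cq :: "2 \<Rightarrow> fn" where
  "cq q = (\<lambda>x y. \<Sum>j\<in>UNIV. \<Sum>l\<in>UNIV. dy q (gmet F j l) x y * mu j x y * mu l x y)"

lemma Tcanon: assumes p: "(x,y) \<in> A"
  shows "dy 1 (gmet F 2 1) x y = dy 1 (gmet F 1 2) x y"
    "dy 2 (gmet F 1 1) x y = dy 1 (gmet F 1 2) x y"
    "dy 2 (gmet F 1 2) x y = dy 1 (gmet F 2 2) x y"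
    "dy 2 (gmet F 2 1) x y = dy 1 (gmet F 2 2) x y"
  using T_sym1[OF p] T_sym2[OF p] by metis+

lemma Psi_expand: assumes p: "(x,y) \<in> A"
  shows "(\<Sum>i\<in>UNIV. y $ i * hdelta F i Psi x y) =
    (\<Sum>j\<in>UNIV. \<Sum>k\<in>UNIV. \<Sum>l\<in>UNIV. (\<Sum>i\<in>UNIV. y $ i * hdelta F i (dy l (gmet F j k)) x y) * mu j x y * mu k x y * mu l x y
      + dy l (gmet F j k) x y * (Dq j x y * mu k x y * mu l x y + mu j x y * Dq k x y * mu l x y + mu j x y * mu k x y * Dq l x y))"
proof -
  have "hdelta F i Psi x y = (\<Sum>j\<in>UNIV. \<Sum>k\<in>UNIV. \<Sum>l\<in>UNIV. hdelta F i (dy l (gmet F j k)) x y * mu j x y * mu k x y * mu l x y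
      + dy l (gmet F j k) x y * (hdelta F i (mu j) x y * mu k x y * mu l x y + mu j x y * hdelta F i (mu k) x y * mu l x y + mu j x y * mu k x y * hdelta F i (mu l) x y))" for i
    unfolding Psi_def using p by (simp add: hdelta_sum2 hdelta_mult, simp add: sum_2 algebra_simps)
  then show ?thesis unfolding Dq_def by (simp add: sum_2 algebra_simps)
qed

lemma BI: assumes p: "(x,y) \<in> A"
  shows "(\<Sum>i\<in>UNIV. y $ i * hdelta F i Psi x y) =
     3 * (\<Sum>q\<in>UNIV. cq q x y * ((\<Sum>k\<in>UNIV. N q k x y * mu k x y) + Dq q x y)) - (\<Sum>l\<in>UNIV. mu l x y * Lm l x y)"
  unfolding Psi_expand[OF p] R_y[OF p] cq_def Lm_def
  using Tcanon[OF p] by (simp add: sum_2 algebra_simps)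

lemma Qy_expand: assumes p: "(x,y) \<in> A"
  shows "(\<Sum>i\<in>UNIV. y $ i * Qf i x y) = (\<Sum>l\<in>UNIV. m l x y * (Dq l x y + (\<Sum>q\<in>UNIV. N l q x y * mu q x y)))"
proof -
  have "(\<Sum>i\<in>UNIV. y $ i * Qf i x y) = (\<Sum>l\<in>UNIV. m l x y * (Dq l x y + (\<Sum>q\<in>UNIV. (\<Sum>i\<in>UNIV. y $ i * dy q (N l i) x y) * mu q x y)))"
    unfolding Qf_def Dq_def by (simp add: sum_2 algebra_simps)
  then show ?thesis by (simp only: eulN1[OF p])
qed

lemma Lmm: assumes p: "(x,y) \<in> A" shows "(\<Sum>l\<in>UNIV. mu l x y * Lm l x y) = 0"
proof -
  have "F x y * (\<Sum>q\<in>UNIV. cq q x y * ((\<Sum>k\<in>UNIV. N q k x y * mu k x y) + Dq q x y))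
      = (\<Sum>q\<in>UNIV. (F x y * cq q x y) * ((\<Sum>k\<in>UNIV. N q k x y * mu k x y) + Dq q x y))"
    by (simp add: sum_2 algebra_simps)
  also have "\<dots> = 2 * I x y * (\<Sum>q\<in>UNIV. m q x y * ((\<Sum>k\<in>UNIV. N q k x y * mu k x y) + Dq q x y))"
    unfolding cq_def c_q[OF p] by (simp add: sum_2 algebra_simps)
  also have "\<dots> = 2 * I x y * (\<Sum>i\<in>UNIV. y $ i * Qf i x y)"
    unfolding Qy_expand[OF p] by (simp add: sum_2 algebra_simps)
  also have "\<dots> = 0" using Q_y[OF p] by simp
  finally have z: "F x y * (\<Sum>q\<in>UNIV. cq q x y * ((\<Sum>k\<in>UNIV. N q k x y * mu k x y) + Dq q x y)) = 0" .
  then have S0: "(\<Sum>q\<in>UNIV. cq q x y * ((\<Sum>k\<in>UNIV. N q k x y * mu k x y) + Dq q x y)) = 0"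
    using Fnz[OF p] by simp
  show ?thesis using yPsi[OF p] unfolding BI[OF p] S0 by simp
qed

lemma Lm0: assumes p: "(x,y) \<in> A" shows "Lm i x y = 0"
  using decomp[OF p, of "\<lambda>i. Lm i x y" i] Lm_y[OF p] Lmm[OF p] by (simp add: mult.commute)

lemma Q0: assumes p: "(x,y) \<in> A" shows "Qf i x y = 0"
  using Q_eq[OF p] Lm0[OF p] by simp

end

context lands
begin

lemma part1:
  assumes f: "sm f" "hom 0 f" and hc: "horiz_const A F f"
  shows "horiz_const A F (vd2 F eps m f)"
  unfolding horiz_const_def
proof (intro ballI allI, clarify)
  fix x y i assume p: "(x,y) \<in> A"
  define c where "c = (\<Sum>j\<in>UNIV. dy j f x y * mu j x y)"
  have hk: "dy k f x y = eps * c * m k x y" for k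
    using decomp[OF p, of "\<lambda>k. dy k f x y" k] homD[OF f(2) p] unfolding c_def by (simp add: mult.commute)
  have hf0: "hdelta F i f x y = 0" if "(x,y) \<in> A" for x y using hc that unfolding horiz_const_def by blast
  have dk: "hdelta F i (dy k f) x y = (\<Sum>j\<in>UNIV. dy k (N j i) x y * dy j f x y)" for k
    using comm[OF f(1) p, of k i] dy_zero[OF hf0 p, where i=k] by simp
  have "hdelta F i (vd2 F eps m f) x y
     = hdelta F i (\<lambda>x y. eps * (F x y * (\<Sum>k\<in>UNIV. mu k x y * dy k f x y))) x y"
    unfolding vd2_def by (simp add: mult.assoc)
  also have "\<dots> = eps * hdelta F i (\<lambda>x y. F x y * (\<Sum>k\<in>UNIV. mu k x y * dy k f x y)) x y"
    by (rule hdelta_cmult) (use p f in simp_all)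
  also have "\<dots> = eps * (F x y * (\<Sum>k\<in>UNIV. hdelta F i (mu k) x y * dy k f x y + mu k x y * hdelta F i (dy k f) x y))"
    using p f by (simp add: hdelta_mult delta_F hdelta_sum2)
  also have "\<dots> = eps * (F x y * (\<Sum>k\<in>UNIV. hdelta F i (mu k) x y * dy k f x y + mu k x y * (\<Sum>j\<in>UNIV. dy k (N j i) x y * dy j f x y)))"
    unfolding dk ..
  also have "\<dots> = eps * (F x y * (\<Sum>k\<in>UNIV. hdelta F i (mu k) x y * (eps * c * m k x y) + mu k x y * (\<Sum>j\<in>UNIV. dy k (N j i) x y * (eps * c * m j x y))))"
    unfolding hk ..
  also have "\<dots> = (eps * eps) * F x y * c * Qf i x y"
    unfolding Qf_def by (simp add: sum_2 algebra_simps del: eps2)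
  also have "\<dots> = 0" using Q0[OF p] by simp
  finally show "hdelta F i (vd2 F eps m f) x y = 0" .
qed

lemma sm_vd2: "sm f \<Longrightarrow> sm (vd2 F eps m f)"
  unfolding vd2_def by simp

lemma hom_vd2: assumes f: "sm f" "hom 0 f" shows "hom 0 (vd2 F eps m f)"
proof -
  have "hom (-1) (dy k f)" for k using hom_dy'[OF f] by simp
  then have "hom (-1) (\<lambda>x y. \<Sum>k\<in>UNIV. mu k x y * dy k f x y)"
    using f by (intro hom_sum2 hom_mult'[OF _ _ hom_mup]) auto
  then have "hom 0 (\<lambda>x y. eps * (F x y * (\<Sum>k\<in>UNIV. mu k x y * dy k f x y)))"
    using f by (intro hom_cmult hom_mult'[OF _ _ homF']) auto
  then show ?thesis by (rule hom_cong) (use f in \<open>auto simp: eqA_def vd2_def mult.assoc\<close>)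
qed

end

theorem lemma2p4:
  fixes A :: "((real^2) \<times> (real^2)) set" and F f I :: fn and m :: "2 \<Rightarrow> fn" and eps :: real
  assumes "conic_pseudo_finsler_surface A F"
    and "berwald_frame A F eps m"
    and "is_main_scalar A F m I"
    and "landsberg A F I"
    and "smooth_on_TM A f" and "homog 0 A f"
    and "horiz_const A F f"
  shows "horiz_const A F (vd2 F eps m f) \<and> horiz_const A F (vd2 F eps m (vd2 F eps m f))"
proof -
  have cs: "conic_subbundle A" "smooth_on_TM A F" "homog 1 A F" "\<forall>(x,y)\<in>A. det (gmat F x y) \<noteq> 0"
    using assms(1) unfolding conic_pseudo_finsler_surface_def by auto
  have o: "open A" using cs(1) unfolding conic_subbundle_def by auto
  interpret opn A by (unfold_locales) (rule o)
  interpret lands A F eps m I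
  proof (unfold_locales)
    show "sm F" by (rule cs(2))
    show "homog 1 A F" by (rule cs(3))
    show "\<And>x y. (x, y) \<in> A \<Longrightarrow> y \<noteq> 0" using cs(1) unfolding conic_subbundle_def by auto
    show "\<And>x y. (x, y) \<in> A \<Longrightarrow> det (gmat F x y) \<noteq> 0" using cs(4) by auto
    show "eps = 1 \<or> eps = - 1" using assms(2) unfolding berwald_frame_def by auto
    show "\<And>i. sm (m i)" using assms(2) unfolding berwald_frame_def by auto
    show "\<And>x y i j. (x, y) \<in> A \<Longrightarrow> gmet F i j x y = dy i F x y * dy j F x y + eps * m i x y * m j x y"
      using assms(2) unfolding berwald_frame_def ell_low_def by auto
    show "\<And>x y i j k. (x, y) \<in> A \<Longrightarrow> F x y * cartan F i j k x y = I x y * m i x y * m j x y * m k x y"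
      using assms(3) unfolding is_main_scalar_def by auto
    show "\<And>x y. (x, y) \<in> A \<Longrightarrow> hd1 F I x y = 0"
      using assms(4) unfolding landsberg_def by auto
  qed
  have f: "sm f" "hom 0 f"
    using assms(5) euler_homog[OF assms(5,6)] unfolding hom_def by auto
  have h1: "horiz_const A F (vd2 F eps m f)" by (rule part1[OF f assms(7)])
  have h2: "horiz_const A F (vd2 F eps m (vd2 F eps m f))"
    by (rule part1[OF sm_vd2[OF f(1)] hom_vd2[OF f] h1])
  show ?thesis using h1 h2 by blast
qed


end
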